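(* Let $d\geq 1$, let $f\in L^{\infty }(T^{d})$ with $\Vert f\Vert _{L^{\infty }(T^{d})}\leq 1$, and let $\nu \in \mathbb{Z}^{d}$. Let $E=\{x\in T^{d}:|f(x)|=1\}$ and for $n,k\in \mathbb{Z}$ put \[ b_{n,n-k}=\int_{E}f(x)^{n}e^{-2\pi i(n-k)\nu \cdot x}\,dx . \] Suppose that $\hat{f}(\xi )=0$ for all $\xi $ in a half-space $S$ of lattice points, that $\nu \in -S$, and that $\hat{f}(0)\neq 0$, and put $C=\log \frac{16}{|\hat{f}(0)|^{4}}$. Then for all integers $M\geq 1$, $p\geq 1$ and all $k\in \mathbb{Z}$, \[ \frac{1}{p+1}\sum_{m=M}^{M+p}|b_{m,m-k}|^{2}\leq \frac{C}{\log (p+1)}. \]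
   Context: $T^{d}=\mathbb{R}^{d}/\mathbb{Z}^{d}$ is the $d$-dimensional torus with normalized Lebesgue measure $dx$, and $\hat{f}(\xi )=\int_{T^{d}}f(x)e^{-2\pi i\xi \cdot x}dx$ for $\xi \in \mathbb{Z}^{d}$. A set $S\subset \mathbb{Z}^{d}$ is a half-space of lattice points if (i) $0\notin S$; (ii) for every $\xi \neq 0$ in $\mathbb{Z}^d$, $\xi \in S$ or $-\xi \in S$; (iii) $\xi ,\xi ^{\prime }\in S$ implies $\xi +\xi ^{\prime }\in S$. Here $-S=\{-\xi :\xi \in S\}$. *)

theory Defs
  imports "HOL-Analysis.Analysis"
begin

text \<open>The torus T^d is modelled by the unit cube [0,1]^d (fundamental domain),
  with Lebesgue measure restricted to it (total mass 1). Lattice points are int^'d.\<close>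

definition torus :: "(real^'d) set" where
  "torus = cbox 0 One"

definition torus_measure :: "(real^'d) measure" where
  "torus_measure = lebesgue_on torus"

definition lat_dot :: "int^'d \<Rightarrow> real^'d \<Rightarrow> real" where
  "lat_dot \<xi> x = (\<Sum>i\<in>UNIV. real_of_int (\<xi> $ i) * x $ i)"

definition fourier_coeff :: "(real^'d \<Rightarrow> complex) \<Rightarrow> int^'d \<Rightarrow> complex" where
  "fourier_coeff f \<xi> =
     (LINT x|torus_measure. f x * exp (- 2 * pi * \<i> * complex_of_real (lat_dot \<xi> x)))"

definition half_space :: "(int^'d) set \<Rightarrow> bool" where
  "half_space S \<longleftrightarrow> 0 \<notin> S \<and> (\<forall>\<xi>. \<xi> \<noteq> 0 \<longrightarrow> \<xi> \<in> S \<or> - \<xi> \<in> S)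
     \<and> (\<forall>\<xi>\<in>S. \<forall>\<xi>'\<in>S. \<xi> + \<xi>' \<in> S)"

definition unimod_set :: "(real^'d \<Rightarrow> complex) \<Rightarrow> (real^'d) set" where
  "unimod_set f = {x \<in> torus. cmod (f x) = 1}"

definition bcoef :: "(real^'d \<Rightarrow> complex) \<Rightarrow> int^'d \<Rightarrow> int \<Rightarrow> int \<Rightarrow> complex" where
  "bcoef f \<nu> n j =
     (LINT x|torus_measure. indicator (unimod_set f) x *
        ((f x) powi n * exp (- 2 * pi * \<i> * of_int j * complex_of_real (lat_dot \<nu> x))))"

end

theory Submission
  imports Defs
begin

definition ee :: "int^'d \<Rightarrow> real^'d \<Rightarrow> complex" where
  "ee \<xi> x = exp (2 * pi * \<i> * complex_of_real (lat_dot \<xi> x))"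

lemma integral_lborel_prod:
  fixes f :: "'a::euclidean_space \<Rightarrow> real \<Rightarrow> complex"
  assumes int: "\<And>b. b\<in>Basis \<Longrightarrow> integrable lborel (f b)"
  shows "(\<integral>x. (\<Prod>b\<in>Basis. f b (x \<bullet> b)) \<partial>(lborel::'a measure)) = (\<Prod>b\<in>Basis. (\<integral>x. f b x \<partial>lborel))"
proof -
  interpret product_sigma_finite "\<lambda>_. lborel" by standard
  have meas: "\<And>b. b\<in>Basis \<Longrightarrow> f b \<in> borel_measurable lborel" using int by auto
  have "(\<integral>x. (\<Prod>b\<in>Basis. f b (x \<bullet> b)) \<partial>(lborel::'a measure))
     = (\<integral>x. (\<Prod>b\<in>Basis. f b (x \<bullet> b)) \<partial>(distr (\<Pi>\<^sub>M b\<in>(Basis::'a set). lborel) borel (\<lambda>f. \<Sum>b\<in>Basis. f b *\<^sub>R b)))"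
    by (subst lborel_eq[where 'a='a]) (rule refl)
  also have "\<dots> = (\<integral>y. (\<Prod>b\<in>Basis. f b ((\<Sum>b'\<in>Basis. y b' *\<^sub>R b') \<bullet> b)) \<partial>(\<Pi>\<^sub>M b\<in>(Basis::'a set). lborel))"
    by (rule integral_distr) (auto intro!: borel_measurable_prod meas measurable_compose[OF _ meas] simp: inner_sum_left)
  also have "\<dots> = (\<integral>y. (\<Prod>b\<in>Basis. f b (y b)) \<partial>(\<Pi>\<^sub>M b\<in>(Basis::'a set). lborel))"
  proof (rule Bochner_Integration.integral_cong[OF refl], rule prod.cong[OF refl])
    fix y b assume "(b::'a) \<in> Basis"
    then have "(\<Sum>b'\<in>Basis. y b' *\<^sub>R b') \<bullet> b = y b"
      by (simp add: inner_sum_left inner_Basis if_distrib sum.If_cases)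
    then show "f b ((\<Sum>b'\<in>Basis. y b' *\<^sub>R b') \<bullet> b) = f b (y b)" by simp
  qed
  also have "\<dots> = (\<Prod>b\<in>Basis. (\<integral>x. f b x \<partial>lborel))"
    by (rule product_integral_prod) (auto intro: int)
  finally show ?thesis .
qed

lemma int_exp_01:
  fixes n :: int
  shows "(\<integral>t. indicator {0..1::real} t *\<^sub>R exp (2 * pi * \<i> * complex_of_real (of_int n * t)) \<partial>lborel)
     = (if n = 0 then 1 else 0)"
proof -
  define c where "c = 2 * pi * \<i> * (of_int n :: complex)"
  have eq: "\<And>t. exp (2 * pi * \<i> * complex_of_real (of_int n * t)) = exp (c * of_real t)"
    by (simp add: c_def mult_ac)
  have "(\<integral>t. indicator {0..1::real} t *\<^sub>R exp (2 * pi * \<i> * complex_of_real (of_int n * t)) \<partial>lborel)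
     = (LBINT t=ereal 0..ereal 1. exp (c * of_real t))"
    by (subst interval_integral_Icc[of "0::real" 1]) (simp_all add: set_lebesgue_integral_def c_def mult_ac)
  also have "\<dots> = (if n = 0 then 1 else 0)"
  proof (cases "n = 0")
    case True
    then show ?thesis by (subst interval_integral_Icc[of "0::real" 1]) (simp_all add: set_lebesgue_integral_def c_def)
  next
    case False
    then have c0: "c \<noteq> 0" by (simp add: c_def)
    let ?F = "\<lambda>z::complex. exp (c * z) / c"
    have "(LBINT t=ereal 0..ereal 1. exp (c * of_real t)) = ?F (of_real 1) - ?F (of_real 0)"
    proof (rule interval_integral_FTC_finite)
      show "continuous_on {min 0 1..max 0 1} (\<lambda>t::real. exp (c * of_real t))"
        by (intro continuous_intros)
      fix x :: real
      have "(?F has_field_derivative exp (c * of_real x)) (at (of_real x))"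
        using c0 by (auto intro!: derivative_eq_intros)
      then show "((\<lambda>t. ?F (of_real t)) has_vector_derivative exp (c * of_real x)) (at x within {min 0 1..max 0 1})"
        by (rule has_vector_derivative_real_field)
    qed
    also have "?F (of_real 1) = ?F (of_real 0)"
    proof -
      have "exp (c * of_real 1) = 1"
        using exp_integer_2pi[of "of_int n"] by (simp add: c_def mult_ac)
      then show ?thesis by simp
    qed
    finally show ?thesis using False by simp
  qed
  finally show ?thesis .
qed

lemma torus_sets[simp]: "torus \<in> sets lebesgue"
  unfolding torus_def by simp

lemma emeasure_torus: "emeasure lebesgue (torus :: (real^'d) set) = 1"
proof -
  have "emeasure lborel (cbox (0::real^'d) One) = (\<Prod>b\<in>Basis. (One - (0::real^'d)) \<bullet> b)"
    by (rule emeasure_lborel_cbox) (auto simp: inner_Basis)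
  also have "\<dots> = 1" by (simp add: inner_Basis)
  finally show ?thesis unfolding torus_def by simp
qed

lemma space_tm[simp]: "space torus_measure = torus"
  unfolding torus_measure_def by simp

definition vv :: "int^'d \<Rightarrow> real^'d" where "vv \<xi> = (\<chi> i. real_of_int (\<xi> $ i))"

lemma lat_dot_inner: "lat_dot \<xi> x = vv \<xi> \<bullet> x"
  by (simp add: lat_dot_def vv_def inner_vec_def)

lemma lat_dot_axis: "lat_dot \<xi> (axis i 1) = real_of_int (\<xi> $ i)"
  by (simp add: lat_dot_inner vv_def inner_axis)

lemma integral_tm_lborel:
  fixes f :: "real^'d \<Rightarrow> complex"
  assumes "f \<in> borel_measurable borel"
  shows "(LINT x|torus_measure. f x) = (LINT x|lborel. indicator torus x *\<^sub>R f x)"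
proof -
  have "(LINT x|torus_measure. f x) = (LINT x|lebesgue. indicator torus x *\<^sub>R f x)"
    unfolding torus_measure_def by (rule integral_restrict_space) auto
  also have "\<dots> = (LINT x|lborel. indicator torus x *\<^sub>R f x)"
    by (rule integral_completion) (use assms in \<open>auto simp: torus_def\<close>)
  finally show ?thesis .
qed

lemma orth:
  fixes \<xi> :: "int^'d"
  shows "(LINT x|torus_measure. ee \<xi> x) = (if \<xi> = 0 then 1 else 0)"
proof -
  define h where "h b t = indicator {0..1::real} t *\<^sub>R exp (complex_of_real (2 * pi) * \<i> * complex_of_real (lat_dot \<xi> b * t))" for b :: "real^'d" and t
  have meas: "ee \<xi> \<in> borel_measurable borel"
    unfolding ee_def lat_dot_def by measurable
  have pt: "indicator torus x *\<^sub>R ee \<xi> x = (\<Prod>b\<in>Basis. h b (x \<bullet> b))" for x :: "real^'d"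
  proof -
    have i1: "(indicator torus x :: real) = (\<Prod>b\<in>(Basis::(real^'d) set). indicator {0..1::real} (x \<bullet> b) :: real)"
    proof (cases "x \<in> torus")
      case True
      then have "\<forall>b\<in>(Basis::(real^'d) set). x \<bullet> b \<in> {0..1}"
        by (auto simp: torus_def mem_box inner_Basis)
      then show ?thesis using True by (simp add: indicator_def)
    next
      case False
      then obtain b where b: "b \<in> (Basis::(real^'d) set)" "x \<bullet> b \<notin> {0..1}"
        by (auto simp: torus_def mem_box inner_Basis)
      have "(\<Prod>b\<in>(Basis::(real^'d) set). indicator {0..1::real} (x \<bullet> b)) = (0::real)"
        using b
        by (intro prod_zero finite_Basis bexI[of _ b]) auto
      then show ?thesis using False by simp
    qed
    have "ee \<xi> x = exp (\<Sum>b\<in>(Basis::(real^'d) set). 2 * pi * \<i> * complex_of_real (lat_dot \<xi> b * (x \<bullet> b)))"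
    proof -
      have "lat_dot \<xi> x = (\<Sum>b\<in>(Basis::(real^'d) set). lat_dot \<xi> b * (x \<bullet> b))"
        by (simp add: lat_dot_inner euclidean_inner[of "vv \<xi>" x] mult.commute)
      then show ?thesis unfolding ee_def by (simp add: sum_distrib_left)
    qed
    also have "\<dots> = (\<Prod>b\<in>(Basis::(real^'d) set). exp (2 * pi * \<i> * complex_of_real (lat_dot \<xi> b * (x \<bullet> b))))"
      by (rule exp_sum) simp
    finally show ?thesis unfolding h_def i1
      by (simp add: scaleR_conv_of_real prod.distrib of_real_prod)
  qed
  have "(LINT x|torus_measure. ee \<xi> x) = (LINT x|lborel. (\<Prod>b\<in>(Basis::(real^'d) set). h b (x \<bullet> b)))"
    by (simp add: integral_tm_lborel[OF meas] pt)
  also have "\<dots> = (\<Prod>b\<in>(Basis::(real^'d) set). (LINT t|lborel. h b t))"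
    unfolding h_def by (rule integral_lborel_prod) (auto intro!: borel_integrable_compact continuous_intros)
  also have "\<dots> = (if \<xi> = 0 then 1 else 0)"
  proof -
    have hb: "(LINT t|lborel. h (axis i 1) t) = (if \<xi> $ i = 0 then 1 else 0)" for i
      unfolding h_def lat_dot_axis by (rule int_exp_01)
    show ?thesis
    proof (cases "\<xi> = 0")
      case True
      then show ?thesis
        by (auto intro!: prod.neutral simp: Basis_vec_def hb)
    next
      case False
      then obtain i where "\<xi> $ i \<noteq> 0" by (metis vec_eq_iff zero_index)
      have b: "axis i (1::real) \<in> Basis" by (auto simp: Basis_vec_def)
      have "(LINT t|lborel. h (axis i 1) t) = 0" using \<open>\<xi> $ i \<noteq> 0\<close> by (simp add: hb)
      then have "(\<Prod>b\<in>(Basis::(real^'d) set). (LINT t|lborel. h b t)) = 0"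
        using b by (metis finite_Basis prod_zero)
      then show ?thesis using False by simp
    qed
  qed
  finally show ?thesis .
qed



lemma lat_dot_add: "lat_dot (\<eta> + \<zeta>) x = lat_dot \<eta> x + lat_dot \<zeta> x"
  by (simp add: lat_dot_def sum.distrib distrib_right)

lemma ee_add: "ee (\<eta> + \<zeta>) x = ee \<eta> x * ee \<zeta> x"
  by (simp add: ee_def lat_dot_add exp_add[symmetric] distrib_left)

lemma ee_0[simp]: "ee 0 x = 1"
  by (simp add: ee_def lat_dot_def)

lemma lat_dot_uminus: "lat_dot (- \<eta>) x = - lat_dot \<eta> x"
  by (simp add: lat_dot_def sum_negf)

lemma ee_uminus: "ee (- \<eta>) x = cnj (ee \<eta> x)"
  by (simp add: ee_def lat_dot_uminus exp_cnj)

lemma norm_ee[simp]: "norm (ee \<eta> x) = 1"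
  by (simp add: ee_def norm_exp_eq_Re)

lemma ee_cont: "continuous_on A (ee \<eta>)"
  unfolding ee_def lat_dot_def by (intro continuous_intros)

lemma ee_meas[measurable]: "ee \<eta> \<in> borel_measurable torus_measure"
  unfolding torus_measure_def by (rule continuous_imp_measurable_on_sets_lebesgue[OF ee_cont]) simp

type_synonym ('d) tlist = "(complex \<times> (int^'d)) list"

fun tp :: "('d::finite) tlist \<Rightarrow> real^'d \<Rightarrow> complex" where
  "tp [] x = 0"
| "tp ((a,\<eta>)#L) x = a * ee \<eta> x + tp L x"

fun ic :: "('d::finite) tlist \<Rightarrow> complex" where
  "ic [] = 0"
| "ic ((a,\<eta>)#L) = (if \<eta> = 0 then a else 0) + ic L"

fun sh :: "complex \<Rightarrow> int^'d \<Rightarrow> ('d::finite) tlist \<Rightarrow> ('d::finite) tlist" where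
  "sh a \<eta> [] = []"
| "sh a \<eta> ((b,\<zeta>)#L) = (a*b, \<eta>+\<zeta>) # sh a \<eta> L"

fun pl :: "('d::finite) tlist \<Rightarrow> ('d::finite) tlist \<Rightarrow> ('d::finite) tlist" where
  "pl [] L2 = []"
| "pl ((a,\<eta>)#L) L2 = sh a \<eta> L2 @ pl L L2"

fun pw :: "('d::finite) tlist \<Rightarrow> nat \<Rightarrow> ('d::finite) tlist" where
  "pw L 0 = [(1,0)]"
| "pw L (Suc n) = pl L (pw L n)"

lemma tp_Cons[simp]: "tp (p#L) x = fst p * ee (snd p) x + tp L x"
  by (cases p) auto
lemma ic_Cons[simp]: "ic (p#L) = (if snd p = 0 then fst p else 0) + ic L"
  by (cases p) auto
lemma sh_Cons[simp]: "sh a \<eta> (p#L) = (a * fst p, \<eta> + snd p) # sh a \<eta> L"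
  by (cases p) auto
lemma pl_Cons[simp]: "pl (p#L) L2 = sh (fst p) (snd p) L2 @ pl L L2"
  by (cases p) auto
declare tp.simps(2)[simp del] ic.simps(2)[simp del] sh.simps(2)[simp del] pl.simps(2)[simp del]

lemma tp_append: "tp (L1 @ L2) x = tp L1 x + tp L2 x"
  by (induction L1) auto

lemma tp_sh: "tp (sh a \<eta> L) x = a * ee \<eta> x * tp L x"
  by (induction L) (auto simp: ee_add algebra_simps)

lemma tp_pl: "tp (pl L1 L2) x = tp L1 x * tp L2 x"
  by (induction L1) (auto simp: tp_append tp_sh algebra_simps)

lemma tp_pw: "tp (pw L n) x = tp L x ^ n"
  by (induction n) (auto simp: tp_pl)

lemma tp_cont: "continuous_on A (tp L)"
  by (induction L) (auto intro!: continuous_intros ee_cont)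

lemma tp_meas[measurable]: "tp L \<in> borel_measurable torus_measure"
  unfolding torus_measure_def by (rule continuous_imp_measurable_on_sets_lebesgue[OF tp_cont]) simp

fun nb :: "('d::finite) tlist \<Rightarrow> real" where
  "nb [] = 0"
| "nb ((a,\<eta>)#L) = norm a + nb L"

lemma nb_Cons[simp]: "nb (p#L) = norm (fst p) + nb L"
  by (cases p) auto
declare nb.simps(2)[simp del]

lemma norm_tp: "norm (tp L x) \<le> nb L"
proof (induction L)
  case (Cons p L)
  have "norm (fst p * ee (snd p) x + tp L x) \<le> norm (fst p) + norm (tp L x)"
    by (metis norm_triangle_ineq norm_mult norm_ee mult.right_neutral)
  then show ?case using Cons by simp
qed simp

lemma fm_tm: "finite_measure torus_measure"
  by (rule finite_measureI) (simp add: torus_measure_def emeasure_restrict_space emeasure_torus)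

lemma int_bdd:
  fixes h :: "real^'d \<Rightarrow> complex"
  assumes "h \<in> borel_measurable torus_measure" "AE x in torus_measure. norm (h x) \<le> B"
  shows "integrable torus_measure h"
  using finite_measure.integrable_const_bound[OF fm_tm assms(2,1)] .

lemma tp_int: "integrable torus_measure (tp L)"
  by (rule int_bdd[where B="nb L"]) (auto intro: norm_tp)

lemma ee_int: "integrable torus_measure (ee \<eta>)"
  by (rule int_bdd[where B=1]) auto

lemma int_tp: "(LINT x|torus_measure. tp L x) = ic L"
proof (induction L)
  case (Cons p L)
  obtain a \<eta> where p: "p = (a,\<eta>)" by (cases p)
  have "(LINT x|torus_measure. tp ((a,\<eta>)#L) x) = (LINT x|torus_measure. a * ee \<eta> x) + (LINT x|torus_measure. tp L x)"
  proof -
    have e: "tp ((a,\<eta>)#L) = (\<lambda>x. a * ee \<eta> x + tp L x)" by (rule ext) simp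
    show ?thesis unfolding e
      by (rule Bochner_Integration.integral_add) (auto intro: tp_int ee_int)
  qed
  also have "\<dots> = a * (if \<eta> = 0 then 1 else 0) + ic L"
    using Cons by (simp add: orth)
  finally show ?case by (simp add: p)
qed simp

definition inP :: "(int^'d) set \<Rightarrow> int^'d \<Rightarrow> bool" where
  "inP S \<eta> \<longleftrightarrow> \<eta> = 0 \<or> - \<eta> \<in> S"

lemma inP_add: "half_space S \<Longrightarrow> inP S \<eta> \<Longrightarrow> inP S \<zeta> \<Longrightarrow> inP S (\<eta> + \<zeta>)"
proof -
  assume hs: "half_space S" and a: "inP S \<eta>" and b: "inP S \<zeta>"
  show ?thesis
  proof (cases "\<eta> = 0 \<or> \<zeta> = 0")
    case True then show ?thesis using a b by auto
  next
    case False
    then have "- \<eta> \<in> S" "- \<zeta> \<in> S" using a b by (auto simp: inP_def)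
    then have "- \<eta> + - \<zeta> \<in> S" using hs by (auto simp: half_space_def)
    then show ?thesis by (simp add: inP_def add.commute)
  qed
qed

lemma inP_sum0: "half_space S \<Longrightarrow> inP S \<eta> \<Longrightarrow> inP S \<zeta> \<Longrightarrow> \<eta> + \<zeta> = 0 \<longleftrightarrow> \<eta> = 0 \<and> \<zeta> = 0"
proof -
  assume hs: "half_space S" and a: "inP S \<eta>" and b: "inP S \<zeta>"
  have False if "\<eta> + \<zeta> = 0" "\<eta> \<noteq> 0"
  proof -
    have z: "\<zeta> = - \<eta>" using that(1) by (simp add: eq_neg_iff_add_eq_0 add.commute)
    have "- \<eta> \<in> S" using a that(2) by (simp add: inP_def)
    moreover have "\<eta> \<in> S" using b z that(2) by (simp add: inP_def)
    ultimately have "\<eta> + - \<eta> \<in> S" using hs unfolding half_space_def by blast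
    then show False using hs by (simp add: half_space_def)
  qed
  then show ?thesis by (metis add.left_neutral)
qed

definition allP :: "(int^'d) set \<Rightarrow> ('d::finite) tlist \<Rightarrow> bool" where
  "allP S L \<longleftrightarrow> (\<forall>p\<in>set L. inP S (snd p))"

lemma allP_simps[simp]: "allP S [] " "allP S (p#L) \<longleftrightarrow> inP S (snd p) \<and> allP S L"
  "allP S (L1 @ L2) \<longleftrightarrow> allP S L1 \<and> allP S L2"
  by (auto simp: allP_def)

lemma allP_sh: "half_space S \<Longrightarrow> inP S \<eta> \<Longrightarrow> allP S L \<Longrightarrow> allP S (sh a \<eta> L)"
  by (induction L) (auto intro: inP_add)

lemma allP_pl: "half_space S \<Longrightarrow> allP S L1 \<Longrightarrow> allP S L2 \<Longrightarrow> allP S (pl L1 L2)"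
  by (induction L1) (auto intro: allP_sh)

lemma allP_pw: "half_space S \<Longrightarrow> allP S L \<Longrightarrow> allP S (pw L n)"
  by (induction n) (auto intro: allP_pl simp: inP_def)

lemma ic_append: "ic (L1 @ L2) = ic L1 + ic L2"
  by (induction L1) auto

lemma ic_sh: "half_space S \<Longrightarrow> inP S \<eta> \<Longrightarrow> allP S L \<Longrightarrow> ic (sh a \<eta> L) = (if \<eta> = 0 then a else 0) * ic L"
proof (induction L)
  case (Cons p L)
  then have "\<eta> + snd p = 0 \<longleftrightarrow> \<eta> = 0 \<and> snd p = 0" by (intro inP_sum0) auto
  then show ?case using Cons by (cases "\<eta> = 0"; cases "snd p = 0") (simp_all add: distrib_left)
qed simp

lemma ic_pl: "half_space S \<Longrightarrow> allP S L1 \<Longrightarrow> allP S L2 \<Longrightarrow> ic (pl L1 L2) = ic L1 * ic L2"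
  by (induction L1) (auto simp: ic_append ic_sh algebra_simps)

lemma ic_pw: "half_space S \<Longrightarrow> allP S L \<Longrightarrow> ic (pw L n) = ic L ^ n"
  by (induction n) (auto simp: ic_pl allP_pw)



definition istrig :: "(real^'d \<Rightarrow> complex) \<Rightarrow> bool" where
  "istrig h \<longleftrightarrow> (\<exists>L. \<forall>x. h x = tp L x)"

lemma istrig_const: "istrig (\<lambda>x. c)"
  unfolding istrig_def by (rule exI[of _ "[(c,0)]"]) simp

lemma istrig_ee: "istrig (ee \<eta>)"
  unfolding istrig_def by (rule exI[of _ "[(1,\<eta>)]"]) simp

lemma istrig_add: "istrig h1 \<Longrightarrow> istrig h2 \<Longrightarrow> istrig (\<lambda>x. h1 x + h2 x)"
  unfolding istrig_def by (metis tp_append)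

lemma istrig_mult: "istrig h1 \<Longrightarrow> istrig h2 \<Longrightarrow> istrig (\<lambda>x. h1 x * h2 x)"
  unfolding istrig_def by (metis tp_pl)

lemma istrig_sum: "finite B \<Longrightarrow> (\<And>b. b \<in> B \<Longrightarrow> istrig (h b)) \<Longrightarrow> istrig (\<lambda>x. \<Sum>b\<in>B. h b x)"
  by (induction B rule: finite_induct) (auto intro: istrig_add istrig_const)

lemma istrig_Re_ee: "istrig (\<lambda>x. complex_of_real (Re (ee \<eta> x)))"
proof -
  have "complex_of_real (Re (ee \<eta> x)) = (1/2) * ee \<eta> x + (1/2) * ee (-\<eta>) x" for x
    unfolding ee_uminus by (simp add: complex_eq_iff)
  then show ?thesis
    by (simp only:) (intro istrig_add istrig_mult istrig_const istrig_ee)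
qed

lemma istrig_Im_ee: "istrig (\<lambda>x. complex_of_real (Im (ee \<eta> x)))"
proof -
  have "complex_of_real (Im (ee \<eta> x)) = (- \<i>/2) * ee \<eta> x + (\<i>/2) * ee (-\<eta>) x" for x
    unfolding ee_uminus by (simp add: complex_eq_iff)
  then show ?thesis
    by (simp only:) (intro istrig_add istrig_mult istrig_const istrig_ee)
qed

definition Th :: "real^'d \<Rightarrow> (real^'d) \<times> (real^'d)" where
  "Th x = ((\<chi> i. cos (2 * pi * x $ i)), (\<chi> i. sin (2 * pi * x $ i)))"

lemma vv_axis: "vv (axis i 1) = axis i (1::real)"
  by (simp add: vv_def axis_def vec_eq_iff)

lemma lat_dot_axis_left: "lat_dot (axis i 1) x = x $ i"
  by (simp add: lat_dot_inner vv_axis inner_commute inner_axis)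

lemma Re_ee_axis: "Re (ee (axis i 1) x) = cos (2 * pi * x $ i)"
  by (simp add: ee_def lat_dot_axis_left Re_exp mult_ac)

lemma Im_ee_axis: "Im (ee (axis i 1) x) = sin (2 * pi * x $ i)"
  by (simp add: ee_def lat_dot_axis_left Im_exp mult_ac)

lemma istrig_Th_Basis:
  assumes "b \<in> (Basis :: ((real^'d) \<times> (real^'d)) set)"
  shows "istrig (\<lambda>x. complex_of_real (Th x \<bullet> b))"
proof -
  obtain u where u: "u \<in> (Basis :: (real^'d) set)" and "b = (u,0) \<or> b = (0,u)"
    using assms unfolding Basis_prod_def by auto
  moreover obtain i where "u = axis i 1" using u unfolding Basis_vec_def by auto
  ultimately have "b = (axis i 1, 0) \<or> b = (0, axis i 1)" by auto
  then show ?thesis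
  proof
    assume b: "b = (axis i 1, 0)"
    have "Th x \<bullet> b = Re (ee (axis i 1) x)" for x
      by (simp add: b Th_def inner_Pair_0 inner_axis Re_ee_axis)
    then show ?thesis using istrig_Re_ee by simp
  next
    assume b: "b = (0, axis i 1)"
    have "Th x \<bullet> b = Im (ee (axis i 1) x)" for x
      by (simp add: b Th_def inner_Pair_0 inner_axis Im_ee_axis)
    then show ?thesis using istrig_Im_ee by simp
  qed
qed

lemma istrig_poly:
  fixes P :: "(real^'d) \<times> (real^'d) \<Rightarrow> real"
  assumes "real_polynomial_function P"
  shows "istrig (\<lambda>x. complex_of_real (P (Th x)))"
  using assms
proof (induction P rule: real_polynomial_function.induct)
  case (linear P)
  then have lin: "linear P" by (rule bounded_linear.linear)
  have rep: "P y = (\<Sum>b\<in>Basis. (y \<bullet> b) * P b)" for y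
  proof -
    have "P y = P (\<Sum>b\<in>Basis. (y \<bullet> b) *\<^sub>R b)" by (simp add: euclidean_representation)
    also have "\<dots> = (\<Sum>b\<in>Basis. (y \<bullet> b) * P b)"
      by (simp add: linear_sum[OF lin] linear_scale[OF lin])
    finally show ?thesis .
  qed
  have "complex_of_real (P (Th x)) = (\<Sum>b\<in>Basis. complex_of_real (Th x \<bullet> b) * complex_of_real (P b))" for x
    by (subst rep) (simp only: of_real_sum of_real_mult)
  then show ?case
    by (simp only:) (intro istrig_sum istrig_mult istrig_Th_Basis istrig_const finite_Basis)
next
  case (const c)
  then show ?case by (rule istrig_const)
next
  case (add f g)
  then show ?case by (simp add: istrig_add)
next
  case (mult f g)
  then show ?case by (simp add: istrig_mult)
qed



lemma Th_inj:
  assumes c: "c \<in> box 0 (One :: real^'d)" and y: "y \<in> cbox 0 One" and eq: "Th c = Th y"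
  shows "c = y"
proof -
  have "c $ i = y $ i" for i
  proof -
    have "cos (2 * pi * c $ i) = cos (2 * pi * y $ i)" "sin (2 * pi * c $ i) = sin (2 * pi * y $ i)"
      using eq unfolding Th_def by (auto simp: vec_eq_iff)
    then obtain n :: int where "2 * pi * c $ i = 2 * pi * y $ i + 2 * pi * real_of_int n"
      using sin_cos_eq_iff by metis
    then have "2 * pi * (c $ i - y $ i - real_of_int n) = 0" by (simp add: algebra_simps)
    then have n: "c $ i = y $ i + real_of_int n" by simp
    have ax: "axis i (1::real) \<in> Basis" by (auto simp: Basis_vec_def)
    have One_ax: "(One::real^'d) \<bullet> axis i 1 = 1" using ax by (simp add: inner_Basis)
    have "(0::real^'d) \<bullet> axis i 1 < c \<bullet> axis i 1 \<and> c \<bullet> axis i 1 < One \<bullet> axis i (1::real)"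
      by (rule bspec[OF c[unfolded mem_box] ax])
    then have c01: "0 < c $ i" "c $ i < 1" unfolding One_ax by (simp_all add: inner_axis)
    have "(0::real^'d) \<bullet> axis i 1 \<le> y \<bullet> axis i 1 \<and> y \<bullet> axis i 1 \<le> One \<bullet> axis i (1::real)"
      by (rule bspec[OF y[unfolded mem_box] ax])
    then have y01: "0 \<le> y $ i" "y $ i \<le> 1" unfolding One_ax by (simp_all add: inner_axis)
    have "n = 0" using n c01 y01 by linarith
    then show ?thesis using n by simp
  qed
  then show ?thesis by (simp add: vec_eq_iff)
qed

lemma Th_cont: "continuous_on A Th"
  unfolding Th_def by (intro continuous_intros continuous_on_vec_lambda)

lemma approx_set:
  fixes A :: "(real^'d) set"
  assumes A: "A \<in> sets lebesgue" "A \<subseteq> torus" and e: "\<epsilon> > 0"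
  obtains u \<phi> D where "istrig (\<lambda>x. complex_of_real (u x))" "continuous_on UNIV \<phi>"
    "\<And>x. 0 \<le> \<phi> x \<and> \<phi> x \<le> 1" "\<And>x. x \<in> torus \<Longrightarrow> \<bar>u x - \<phi> x\<bar> < \<epsilon>"
    "D \<in> sets lebesgue" "emeasure lebesgue D < ennreal \<epsilon>" "\<And>x. x \<in> torus \<Longrightarrow> x \<notin> D \<Longrightarrow> \<phi> x = indicator A x"
proof -
  define B0 :: "(real^'d) set" where "B0 = box 0 One"
  define A0 where "A0 = A \<inter> B0"
  have A0: "A0 \<in> sets lebesgue" unfolding A0_def B0_def by (metis A(1) fmeasurableD lmeasurable_box sets.Int)
  have e2: "\<epsilon>/2 > 0" using e by simp
  obtain C where C: "closed C" "C \<subseteq> A0" "A0 - C \<in> lmeasurable" "emeasure lebesgue (A0 - C) < ennreal (\<epsilon>/2)"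
    using sets_lebesgue_inner_closed[OF A0 e2] by blast
  obtain U where U: "open U" "A0 \<subseteq> U" "U - A0 \<in> lmeasurable" "emeasure lebesgue (U - A0) < ennreal (\<epsilon>/2)"
    using sets_lebesgue_outer_open[OF A0 e2] by blast
  define V where "V = U \<inter> B0"
  have CV: "C \<subseteq> V" using C U by (auto simp: V_def A0_def)
  have torus_cbox: "torus = cbox (0::real^'d) One" by (simp add: torus_def)
  have Ct: "C \<subseteq> torus" using C(2) A by (auto simp: A0_def)
  have compC: "compact C" using C(1) Ct by (metis torus_cbox bounded_cbox bounded_subset compact_eq_bounded_closed)
  have compD: "compact (torus - V)"
  proof -
    have "torus - V = torus \<inter> - V" by auto
    moreover have "closed (torus \<inter> - V)" using U(1) by (auto simp: V_def B0_def torus_cbox intro!: closed_Int)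
    ultimately show ?thesis by (metis torus_cbox bounded_cbox bounded_Int compact_eq_bounded_closed)
  qed
  have K1: "compact (Th ` C)" by (rule compact_continuous_image[OF Th_cont compC])
  have K2: "compact (Th ` (torus - V))" by (rule compact_continuous_image[OF Th_cont compD])
  have disj: "Th ` (torus - V) \<inter> Th ` C = {}"
  proof (rule ccontr)
    assume "Th ` (torus - V) \<inter> Th ` C \<noteq> {}"
    then obtain y c where y: "y \<in> torus" "y \<notin> V" and c: "c \<in> C" and eq: "Th c = Th y" by force
    have "c \<in> B0" using c C(2) by (auto simp: A0_def)
    then have "c = y" using Th_inj[OF _ _ eq] y(1) by (simp add: B0_def torus_cbox)
    then show False using c CV y by auto
  qed
  obtain F :: "(real^'d) \<times> (real^'d) \<Rightarrow> real" where F: "continuous_on UNIV F"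
    "\<And>z. F z \<in> closed_segment 0 1" "\<And>z. z \<in> Th ` (torus - V) \<Longrightarrow> F z = 0"
    "\<And>z. z \<in> Th ` C \<Longrightarrow> F z = 1"
    using Urysohn[OF compact_imp_closed[OF K2] compact_imp_closed[OF K1] disj] by metis
  define \<phi> where "\<phi> x = F (Th x)" for x
  have Kc: "compact (Th ` (torus :: (real^'d) set))" by (rule compact_continuous_image[OF Th_cont]) (simp add: torus_cbox)
  have "\<exists>g. polynomial_function g \<and> (\<forall>z \<in> Th ` (torus :: (real^'d) set). norm (F z - g z) < \<epsilon>)"
    by (rule Stone_Weierstrass_polynomial_function[OF Kc continuous_on_subset[OF F(1)] e]) simp
  then obtain g where g: "polynomial_function g" "\<And>z. z \<in> Th ` (torus :: (real^'d) set) \<Longrightarrow> norm (F z - g z) < \<epsilon>"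
    by blast
  define u where "u x = g (Th x)" for x
  define D where "D = (A0 - C) \<union> (U - A0) \<union> (torus - B0)"
  show thesis
  proof
    show "istrig (\<lambda>x. complex_of_real (u x))"
      unfolding u_def by (rule istrig_poly) (use g(1) real_polynomial_function_eq in auto)
    show "continuous_on UNIV \<phi>"
      unfolding \<phi>_def by (rule continuous_on_compose2[OF F(1) Th_cont]) auto
    show "0 \<le> \<phi> x \<and> \<phi> x \<le> 1" for x
      using F(2)[of "Th x"] by (auto simp: \<phi>_def closed_segment_eq_real_ivl)
    show "\<bar>u x - \<phi> x\<bar> < \<epsilon>" if "x \<in> torus" for x
      using g(2)[of "Th x"] that by (auto simp: u_def \<phi>_def)
    show "D \<in> sets lebesgue"
      using A0 U C by (auto simp: D_def B0_def intro!: sets.Un sets.Diff)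
    show "emeasure lebesgue D < ennreal \<epsilon>"
    proof -
      have null: "emeasure lebesgue (torus - B0) = 0"
      proof -
        have B01: "emeasure lebesgue B0 = 1"
        proof -
          have "emeasure lborel (box (0::real^'d) One) = (\<Prod>b\<in>Basis. (One - (0::real^'d)) \<bullet> b)"
            by (rule emeasure_lborel_box) (auto simp: inner_Basis)
          also have "\<dots> = 1" by (simp add: inner_Basis)
          finally show ?thesis by (simp add: B0_def)
        qed
        have sub: "B0 \<subseteq> torus" by (simp add: B0_def torus_cbox box_subset_cbox)
        have m2: "B0 \<in> sets lebesgue" by (metis B0_def fmeasurableD lmeasurable_box)
        have fin: "emeasure lebesgue B0 \<noteq> \<infinity>" using B01 by simp
        have "emeasure lebesgue (torus - B0) = emeasure lebesgue (torus::(real^'d) set) - emeasure lebesgue B0"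
          using emeasure_Diff[OF fin torus_sets m2 sub] .
        then show ?thesis by (simp add: emeasure_torus B01)
      qed
      have "emeasure lebesgue D \<le> emeasure lebesgue (A0 - C) + emeasure lebesgue (U - A0) + emeasure lebesgue (torus - B0)"
        unfolding D_def
        by (intro order.trans[OF emeasure_subadditive] add_mono order.refl emeasure_subadditive)
          (use A0 U C in \<open>auto simp: B0_def intro!: sets.Un sets.Diff\<close>)
      also have "\<dots> < ennreal (\<epsilon>/2) + ennreal (\<epsilon>/2)"
        unfolding null using C(4) U(4) by (simp add: add_strict_mono)
      also have "\<dots> = ennreal \<epsilon>" using e by (simp flip: ennreal_plus)
      finally show ?thesis .
    qed
    show "\<phi> x = indicator A x" if x: "x \<in> torus" "x \<notin> D" for x
    proof (cases "x \<in> C")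
      case True
      then have "\<phi> x = 1" using F(4) by (auto simp: \<phi>_def)
      moreover have "x \<in> A" using True C(2) by (auto simp: A0_def)
      ultimately show ?thesis by simp
    next
      case False
      then have xB: "x \<in> B0" and "x \<notin> A0 - C" "x \<notin> U - A0" using x by (auto simp: D_def)
      then have "x \<notin> A0" using False by auto
      then have "x \<notin> U" using \<open>x \<notin> U - A0\<close> by auto
      then have "x \<notin> V" by (simp add: V_def)
      then have "\<phi> x = 0" using F(3) x(1) by (auto simp: \<phi>_def)
      moreover have "x \<notin> A" using \<open>x \<notin> A0\<close> xB by (auto simp: A0_def)
      ultimately show ?thesis by simp
    qed
  qed
qed



lemma tm_measure: "A \<in> sets lebesgue \<Longrightarrow> A \<subseteq> torus \<Longrightarrow> measure torus_measure A = measure lebesgue A"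
  unfolding torus_measure_def by (rule measure_restrict_space) auto

lemma tm_sets: "A \<in> sets lebesgue \<Longrightarrow> A \<subseteq> torus \<Longrightarrow> A \<in> sets torus_measure"
  unfolding torus_measure_def by (subst sets_restrict_space_iff) auto

lemma int_ind_tm: "A \<in> sets lebesgue \<Longrightarrow> (LINT x|torus_measure. indicator A x) = measure lebesgue (A \<inter> torus)"
  unfolding Bochner_Integration.integral_indicator space_tm by (rule tm_measure) auto

lemma measure_torus: "measure lebesgue (torus :: (real^'d) set) = 1"
  by (simp add: measure_def emeasure_torus)

lemma small_measure:
  assumes "D \<in> sets lebesgue" "emeasure lebesgue D < ennreal e"
  shows "measure lebesgue (D \<inter> (torus :: (real^'d) set)) \<le> e"
proof -
  have "emeasure lebesgue (D \<inter> torus) \<le> emeasure lebesgue D"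
    by (rule emeasure_mono) (use assms in auto)
  then have lt: "emeasure lebesgue (D \<inter> torus) < ennreal e" using assms(2) by simp
  have "emeasure lebesgue (D \<inter> torus) \<le> emeasure lebesgue (torus :: (real^'d) set)"
    by (rule emeasure_mono) auto
  then have le1: "emeasure lebesgue (D \<inter> torus) \<le> 1" by (simp add: emeasure_torus)
  have "emeasure lebesgue (D \<inter> torus) \<noteq> \<infinity>"
    using le1 ennreal_ineq_diff_add by force
  then have "emeasure lebesgue (D \<inter> torus) = ennreal (measure lebesgue (D \<inter> torus))"
    by (metis emeasure_eq_ennreal_measure infinity_ennreal_def)
  then show ?thesis using lt by (metis ennreal_less_iff order_less_imp_le measure_nonneg)
qed

lemma measure_le_1:
  assumes "A \<in> sets lebesgue" "A \<subseteq> (torus :: (real^'d) set)"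
  shows "measure lebesgue A \<le> 1"
proof -
  have "measure lebesgue A \<le> measure lebesgue (torus :: (real^'d) set)"
    by (rule measure_mono_fmeasurable) (use assms in \<open>auto simp: fmeasurable_def emeasure_torus\<close>)
  then show ?thesis by (simp add: measure_torus)
qed

lemma measure_tm_torus[simp]: "measure torus_measure (torus :: (real^'d) set) = 1"
  by (simp add: tm_measure measure_torus)

lemma cont_meas_tm:
  fixes h :: "real^'d \<Rightarrow> 'b::euclidean_space"
  shows "continuous_on UNIV h \<Longrightarrow> h \<in> borel_measurable torus_measure"
  unfolding torus_measure_def
  by (rule continuous_imp_measurable_on_sets_lebesgue) (auto intro: continuous_on_subset)

lemma int_bdd_real:
  fixes h :: "real^'d \<Rightarrow> real"
  assumes "h \<in> borel_measurable torus_measure" "AE x in torus_measure. norm (h x) \<le> B"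
  shows "integrable torus_measure h"
  using finite_measure.integrable_const_bound[OF fm_tm assms(2,1)] .

lemma int_const_tm: "(LINT x|torus_measure. (c::real)) = c"
  by (simp add: tm_measure measure_torus)



lemma fc_ee: "fourier_coeff f \<xi> = (LINT x|torus_measure. f x * ee (- \<xi>) x)"
  unfolding fourier_coeff_def ee_def lat_dot_uminus by (simp add: mult_ac)

lemma exp_partial_bound: "norm (\<Sum>n<N. z ^ n /\<^sub>R fact n) \<le> exp (norm (z::complex))"
proof -
  have "norm (\<Sum>n<N. z ^ n /\<^sub>R fact n) \<le> (\<Sum>n<N. norm z ^ n /\<^sub>R fact n)"
    by (rule order.trans[OF norm_sum]) (simp add: norm_power)
  also have "\<dots> \<le> (\<Sum>n. norm z ^ n /\<^sub>R fact n)"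
    by (rule sum_le_suminf[OF summable_exp_generic]) auto
  also have "\<dots> = exp (norm z)" by (simp add: exp_def)
  finally show ?thesis .
qed

definition fixP :: "(int^'d) set \<Rightarrow> ('d::finite) tlist \<Rightarrow> 'd tlist" where
  "fixP S L = map (\<lambda>p. if inP S (snd p) then p else (cnj (fst p), - snd p)) L"

lemma allP_fixP:
  assumes hs: "half_space S" shows "allP S (fixP S L)"
proof (induction L)
  case (Cons p L)
  have "inP S (- snd p)" if "\<not> inP S (snd p)"
  proof -
    have "snd p \<noteq> 0" "- snd p \<notin> S" using that by (auto simp: inP_def)
    then have "snd p \<in> S" using hs by (auto simp: half_space_def)
    then show ?thesis by (simp add: inP_def)
  qed
  then show ?case using Cons by (auto simp: fixP_def)
qed (simp add: fixP_def)

lemma Re_tp_fixP: "Re (tp (fixP S L) x) = Re (tp L x)"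
proof (induction L)
  case (Cons p L)
  have "Re (cnj (fst p) * ee (- snd p) x) = Re (fst p * ee (snd p) x)"
    by (simp add: ee_uminus)
  then show ?case using Cons by (auto simp: fixP_def)
qed (simp add: fixP_def)

context
  fixes f :: "real^'d \<Rightarrow> complex" and \<nu> :: "int^'d" and S :: "(int^'d) set"
  assumes meas: "f \<in> borel_measurable torus_measure"
    and bdd: "AE x in torus_measure. cmod (f x) \<le> 1"
    and hs: "half_space S"
    and vanish: "\<forall>\<xi>\<in>S. fourier_coeff f \<xi> = 0"
    and nu: "\<nu> \<in> uminus ` S"
begin

definition gg :: "complex \<Rightarrow> real^'d \<Rightarrow> complex" where
  "gg \<mu> x = f x - \<mu> * ee \<nu> x"

lemma mnu: "- \<nu> \<in> S" using nu by auto

lemma nu0: "\<nu> \<noteq> 0" using mnu hs by (auto simp: half_space_def)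

lemma gg_meas[measurable]: "gg \<mu> \<in> borel_measurable torus_measure"
  unfolding gg_def using meas by measurable

lemma gg_bdd: "AE x in torus_measure. cmod (gg \<mu> x) \<le> 1 + cmod \<mu>"
  using bdd
proof eventually_elim
  case (elim x)
  have "cmod (gg \<mu> x) \<le> cmod (f x) + cmod (\<mu> * ee \<nu> x)"
    unfolding gg_def by (rule norm_triangle_ineq4)
  then show ?case using elim by (simp add: norm_mult)
qed

lemma gg_int: "integrable torus_measure (gg \<mu>)"
  by (rule int_bdd[OF gg_meas gg_bdd])

lemma f_int: "integrable torus_measure f"
  by (rule int_bdd[OF meas bdd])

lemma gg_mult_int:
  assumes "h \<in> borel_measurable torus_measure" "\<And>x. norm (h x) \<le> B"
  shows "integrable torus_measure (\<lambda>x. gg \<mu> x * h x)"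
proof (rule int_bdd[where B="(1 + cmod \<mu>) * B"])
  show "(\<lambda>x. gg \<mu> x * h x) \<in> borel_measurable torus_measure" using assms by measurable
  show "AE x in torus_measure. norm (gg \<mu> x * h x) \<le> (1 + cmod \<mu>) * B"
    using gg_bdd
  proof (rule eventually_mono)
    fix x assume "cmod (gg \<mu> x) \<le> 1 + cmod \<mu>"
    then show "norm (gg \<mu> x * h x) \<le> (1 + cmod \<mu>) * B" unfolding norm_mult
      by (intro mult_mono) (use assms(2)[of x] in auto)
  qed
qed

lemma f_mult_int:
  assumes "h \<in> borel_measurable torus_measure" "\<And>x. norm (h x) \<le> B"
  shows "integrable torus_measure (\<lambda>x. f x * h x)"
proof (rule int_bdd[where B="B"])
  show "(\<lambda>x. f x * h x) \<in> borel_measurable torus_measure" using assms meas by measurable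
  show "AE x in torus_measure. norm (f x * h x) \<le> B"
    using bdd
  proof (rule eventually_mono)
    fix x assume "cmod (f x) \<le> 1"
    then show "norm (f x * h x) \<le> B" unfolding norm_mult
      using mult_mono[of "cmod (f x)" 1 "norm (h x)" B] assms(2)[of x] by auto
  qed
qed

lemma int_gg_ee:
  assumes "inP S \<eta>"
  shows "(LINT x|torus_measure. gg \<mu> x * ee \<eta> x) = (if \<eta> = 0 then fourier_coeff f 0 else 0)"
proof -
  have "(LINT x|torus_measure. gg \<mu> x * ee \<eta> x) =
      (LINT x|torus_measure. f x * ee \<eta> x) - \<mu> * (LINT x|torus_measure. ee (\<nu> + \<eta>) x)"
  proof -
    have "(LINT x|torus_measure. gg \<mu> x * ee \<eta> x) =
      (LINT x|torus_measure. f x * ee \<eta> x - \<mu> * ee (\<nu> + \<eta>) x)"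
      unfolding gg_def by (simp add: ee_add algebra_simps)
    also have "\<dots> = (LINT x|torus_measure. f x * ee \<eta> x) - (LINT x|torus_measure. \<mu> * ee (\<nu> + \<eta>) x)"
      by (rule Bochner_Integration.integral_diff)
        (auto intro!: f_mult_int[where B=1] integrable_mult_right ee_int)
    finally show ?thesis by simp
  qed
  also have "(LINT x|torus_measure. ee (\<nu> + \<eta>) x) = 0"
  proof -
    have "\<nu> + \<eta> \<noteq> 0"
    proof
      assume "\<nu> + \<eta> = 0"
      then have "\<eta> = - \<nu>" by (simp add: eq_neg_iff_add_eq_0 add.commute)
      then have "\<nu> \<in> S" using assms nu0 by (auto simp: inP_def)
      then have "\<nu> + - \<nu> \<in> S" using mnu hs unfolding half_space_def by blast
      then show False using hs by (simp add: half_space_def)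
    qed
    then show ?thesis by (simp add: orth)
  qed
  also have "(LINT x|torus_measure. f x * ee \<eta> x) = (if \<eta> = 0 then fourier_coeff f 0 else 0)"
  proof (cases "\<eta> = 0")
    case True then show ?thesis by (simp add: fc_ee)
  next
    case False
    then have "- \<eta> \<in> S" using assms by (simp add: inP_def)
    then have "fourier_coeff f (- \<eta>) = 0" using vanish by auto
    then show ?thesis using False by (simp add: fc_ee)
  qed
  finally show ?thesis by simp
qed

lemma int_gg_tp:
  assumes "allP S L"
  shows "(LINT x|torus_measure. gg \<mu> x * tp L x) = fourier_coeff f 0 * ic L"
  using assms
proof (induction L)
  case Nil then show ?case by simp
next
  case (Cons p L)
  have "(LINT x|torus_measure. gg \<mu> x * tp (p#L) x) =
     (LINT x|torus_measure. fst p * (gg \<mu> x * ee (snd p) x) + gg \<mu> x * tp L x)"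
    by (simp add: algebra_simps)
  also have "\<dots> = fst p * (LINT x|torus_measure. gg \<mu> x * ee (snd p) x) + (LINT x|torus_measure. gg \<mu> x * tp L x)"
  proof -
    have i1: "integrable torus_measure (\<lambda>x. gg \<mu> x * ee (snd p) x)"
      by (rule gg_mult_int[where B=1]) auto
    have i2: "integrable torus_measure (\<lambda>x. gg \<mu> x * tp L x)"
      by (rule gg_mult_int[where B="nb L"]) (auto intro: norm_tp)
    show ?thesis
      by (subst Bochner_Integration.integral_add) (auto intro!: integrable_mult_right i1 i2)
  qed
  also have "\<dots> = fst p * (if snd p = 0 then fourier_coeff f 0 else 0) + fourier_coeff f 0 * ic L"
  proof -
    have "(LINT x|torus_measure. gg \<mu> x * ee (snd p) x) = (if snd p = 0 then fourier_coeff f 0 else 0)"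
      by (rule int_gg_ee) (use Cons.prems in simp)
    then show ?thesis using Cons by simp
  qed
  also have "\<dots> = fourier_coeff f 0 * ic (p#L)"
    by (simp add: distrib_left mult.commute)
  finally show ?case .
qed

lemma int_gg_exp:
  assumes "allP S L"
  shows "(LINT x|torus_measure. gg \<mu> x * exp (tp L x)) = fourier_coeff f 0 * exp (ic L)"
proof -
  define s where "s N x = gg \<mu> x * (\<Sum>n<N. tp L x ^ n /\<^sub>R fact n)" for N x
  have s_alt: "s N x = (\<Sum>n<N. (gg \<mu> x * tp (pw L n) x) /\<^sub>R fact n)" for N x
    unfolding s_def by (simp add: tp_pw sum_distrib_left)
  have lim1: "(\<lambda>N. LINT x|torus_measure. s N x) \<longlonglongrightarrow> (LINT x|torus_measure. gg \<mu> x * exp (tp L x))"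
  proof (rule integral_dominated_convergence[where w="\<lambda>x. cmod (gg \<mu> x) * exp (nb L)"])
    show "(\<lambda>x. gg \<mu> x * exp (tp L x)) \<in> borel_measurable torus_measure" by measurable
    show "s N \<in> borel_measurable torus_measure" for N unfolding s_def by measurable
    show "integrable torus_measure (\<lambda>x. cmod (gg \<mu> x) * exp (nb L))"
      using gg_int by (intro integrable_mult_left integrable_norm)
    show "AE x in torus_measure. (\<lambda>N. s N x) \<longlonglongrightarrow> gg \<mu> x * exp (tp L x)"
      unfolding s_def by (intro AE_I2 tendsto_mult_left) (use exp_converges[unfolded sums_def] in auto)
    show "AE x in torus_measure. norm (s N x) \<le> cmod (gg \<mu> x) * exp (nb L)" for N
    proof (intro AE_I2)
      fix x
      have "norm (s N x) \<le> cmod (gg \<mu> x) * exp (norm (tp L x))"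
        unfolding s_def norm_mult by (intro mult_left_mono exp_partial_bound) auto
      also have "\<dots> \<le> cmod (gg \<mu> x) * exp (nb L)"
        by (intro mult_left_mono) (auto intro: norm_tp)
      finally show "norm (s N x) \<le> cmod (gg \<mu> x) * exp (nb L)" .
    qed
  qed
  have "(LINT x|torus_measure. s N x) = (\<Sum>n<N. (fourier_coeff f 0 * ic L ^ n) /\<^sub>R fact n)" for N
  proof -
    have "(LINT x|torus_measure. s N x) = (\<Sum>n<N. (LINT x|torus_measure. gg \<mu> x * tp (pw L n) x) /\<^sub>R fact n)"
      unfolding s_alt
      by (subst Bochner_Integration.integral_sum)
        (auto intro!: integrable_scaleR_right gg_mult_int[where B="nb (pw L n)" for n] norm_tp)
    then show ?thesis
      using assms by (simp add: int_gg_tp allP_pw[OF hs assms] ic_pw[OF hs assms])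
  qed
  moreover have "(\<lambda>N. (\<Sum>n<N. (fourier_coeff f 0 * ic L ^ n) /\<^sub>R fact n)) \<longlonglongrightarrow> fourier_coeff f 0 * exp (ic L)"
  proof -
    have "(\<lambda>N. fourier_coeff f 0 * (\<Sum>n<N. ic L ^ n /\<^sub>R fact n)) \<longlonglongrightarrow> fourier_coeff f 0 * exp (ic L)"
      by (intro tendsto_mult_left) (use exp_converges[unfolded sums_def] in auto)
    moreover have "\<And>N. fourier_coeff f 0 * (\<Sum>n<N. ic L ^ n /\<^sub>R fact n) = (\<Sum>n<N. (fourier_coeff f 0 * ic L ^ n) /\<^sub>R fact n)"
      by (simp add: sum_distrib_left)
    ultimately show ?thesis by simp
  qed
  ultimately have lim2: "(\<lambda>N. LINT x|torus_measure. s N x) \<longlonglongrightarrow> fourier_coeff f 0 * exp (ic L)"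
    by simp
  show ?thesis using LIMSEQ_unique[OF lim1 lim2] .
qed


lemma jensen_trig:
  "cmod (fourier_coeff f 0) * exp (LINT x|torus_measure. Re (tp L x))
     \<le> (LINT x|torus_measure. cmod (gg \<mu> x) * exp (Re (tp L x)))"
proof -
  let ?L = "fixP S L"
  have aP: "allP S ?L" by (rule allP_fixP[OF hs])
  have ReEq: "\<And>x. Re (tp ?L x) = Re (tp L x)" by (rule Re_tp_fixP)
  have "(LINT x|torus_measure. Re (tp L x)) = (LINT x|torus_measure. Re (tp ?L x))"
    by (simp add: ReEq)
  also have "\<dots> = Re (LINT x|torus_measure. tp ?L x)"
    by (rule integral_Re[OF tp_int])
  also have "\<dots> = Re (ic ?L)" by (simp add: int_tp)
  finally have eq1: "(LINT x|torus_measure. Re (tp L x)) = Re (ic ?L)" .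
  have "cmod (fourier_coeff f 0) * exp (Re (ic ?L)) = cmod (fourier_coeff f 0 * exp (ic ?L))"
    by (simp add: norm_mult norm_exp_eq_Re)
  also have "\<dots> = cmod (LINT x|torus_measure. gg \<mu> x * exp (tp ?L x))"
    by (simp add: int_gg_exp[OF aP])
  also have "\<dots> \<le> (LINT x|torus_measure. cmod (gg \<mu> x * exp (tp ?L x)))"
    by (rule integral_norm_bound)
  also have "\<dots> = (LINT x|torus_measure. cmod (gg \<mu> x) * exp (Re (tp L x)))"
    by (simp add: norm_mult norm_exp_eq_Re ReEq)
  finally show ?thesis by (simp add: eq1)
qed


lemma AE_tm_mono:
  assumes "AE x in torus_measure. P x" "\<And>x. x \<in> torus \<Longrightarrow> P x \<Longrightarrow> Q x"
  shows "AE x in torus_measure. Q x"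
proof -
  have "AE x in torus_measure. x \<in> space torus_measure" by (rule AE_space)
  with assms(1) show ?thesis by eventually_elim (use assms(2) in auto)
qed

lemma exp_convex_01:
  fixes s t :: real
  assumes "0 \<le> t" "t \<le> 1"
  shows "exp (s * t) \<le> 1 + (exp s - 1) * t"
proof -
  have "exp ((1 - t) *\<^sub>R 0 + t *\<^sub>R s) \<le> (1 - t) * exp 0 + t * exp s"
    by (rule convex_onD[OF exp_convex]) (use assms in auto)
  then show ?thesis by (simp add: algebra_simps)
qed

lemma J_eps:
  assumes A: "A \<in> sets lebesgue" "A \<subseteq> torus" and \<delta>: "0 < \<delta>" "\<delta> < 2"
    and small: "\<And>x. x \<in> A \<Longrightarrow> cmod (gg \<mu> x) \<le> \<delta>" and \<mu>: "cmod \<mu> = 1"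
    and \<epsilon>: "0 < \<epsilon>"
  shows "cmod (fourier_coeff f 0) * exp (ln (2/\<delta>) * measure lebesgue A)
     \<le> exp (3 * ln (2/\<delta>) * \<epsilon>) * (2 + 2 * (2/\<delta> - 1) * \<epsilon>)"
proof -
  define s where "s = ln (2/\<delta>)"
  have s0: "s > 0" using \<delta> by (simp add: s_def)
  have es: "exp s = 2/\<delta>" using \<delta> by (simp add: s_def)
  define c where "c = cmod (fourier_coeff f 0)"
  have c0: "c \<ge> 0" by (simp add: c_def)
  define K where "K = 2 * (exp s - 1)"
  have K0: "K \<ge> 0" using s0 by (simp add: K_def)
  obtain u \<phi> D where ut: "istrig (\<lambda>x. complex_of_real (u x))" and \<phi>c: "continuous_on UNIV \<phi>"
    and \<phi>01: "\<And>x. 0 \<le> \<phi> x \<and> \<phi> x \<le> 1" and u\<phi>: "\<And>x. x \<in> torus \<Longrightarrow> \<bar>u x - \<phi> x\<bar> < \<epsilon>"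
    and Dm: "D \<in> sets lebesgue" and De: "emeasure lebesgue D < ennreal \<epsilon>"
    and D\<phi>: "\<And>x. x \<in> torus \<Longrightarrow> x \<notin> D \<Longrightarrow> \<phi> x = indicator A x"
    using approx_set[OF A \<epsilon>] by blast
  have "istrig (\<lambda>x. complex_of_real s * complex_of_real (u x))"
    by (rule istrig_mult[OF istrig_const ut])
  then obtain L where L: "\<And>x. complex_of_real s * complex_of_real (u x) = tp L x"
    unfolding istrig_def by blast
  have ReL: "Re (tp L x) = s * u x" for x using L[of x, symmetric] by simp
  have umeas: "u \<in> borel_measurable torus_measure"
  proof -
    have "(\<lambda>x. Re (tp L x) / s) \<in> borel_measurable torus_measure" by measurable
    moreover have "(\<lambda>x. Re (tp L x) / s) = u" using s0 by (simp add: ReL fun_eq_iff)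
    ultimately show ?thesis by simp
  qed
  have \<phi>meas: "\<phi> \<in> borel_measurable torus_measure" by (rule cont_meas_tm[OF \<phi>c])
  have jt: "c * exp (LINT x|torus_measure. s * u x) \<le> (LINT x|torus_measure. cmod (gg \<mu> x) * exp (s * u x))"
    using jensen_trig[of L \<mu>] by (simp add: ReL c_def)
  define D' where "D' = D \<inter> torus"
  have D'm: "D' \<in> sets lebesgue" unfolding D'_def by (intro sets.Int Dm torus_sets)
  have D'e: "measure lebesgue (D' \<inter> torus) \<le> \<epsilon>"
    using small_measure[OF Dm De] by (simp add: D'_def Int_absorb2)
  have intD': "(LINT x|torus_measure. indicator D' x) \<le> \<epsilon>"
    by (subst int_ind_tm[OF D'm]) (rule D'e)
  have intA: "(LINT x|torus_measure. indicator A x) = measure lebesgue A"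
    by (subst int_ind_tm[OF A(1)]) (use A in \<open>simp add: Int_absorb2\<close>)
  have indA_int: "integrable torus_measure (indicator A :: _ \<Rightarrow> real)"
    using A by (intro integrable_real_indicator) (auto simp: tm_sets finite_measure.emeasure_finite[OF fm_tm] less_top[symmetric])
  have indD_int: "integrable torus_measure (indicator D' :: _ \<Rightarrow> real)"
    using D'm by (intro integrable_real_indicator) (auto simp: D'_def tm_sets finite_measure.emeasure_finite[OF fm_tm] less_top[symmetric])
  have \<phi>_int: "integrable torus_measure \<phi>"
    by (rule int_bdd_real[OF \<phi>meas, where B=1]) (use \<phi>01 in auto)
  have u_int: "integrable torus_measure u"
  proof (rule int_bdd_real[OF umeas, where B="1 + \<epsilon>"])
    show "AE x in torus_measure. norm (u x) \<le> 1 + \<epsilon>"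
    proof (rule AE_I2)
      fix x :: "real^'d" assume "x \<in> space torus_measure"
      then have "\<bar>u x - \<phi> x\<bar> < \<epsilon>" using u\<phi> by simp
      then show "norm (u x) \<le> 1 + \<epsilon>" using \<phi>01[of x] by auto
    qed
  qed
  have low_phi: "measure lebesgue A - \<epsilon> \<le> (LINT x|torus_measure. \<phi> x)"
  proof -
    have "(LINT x|torus_measure. indicator A x - indicator D' x) \<le> (LINT x|torus_measure. \<phi> x)"
    proof (rule integral_mono)
      show "integrable torus_measure (\<lambda>x. indicator A x - indicator D' x :: real)"
        using indA_int indD_int by auto
      show "integrable torus_measure \<phi>" by (rule \<phi>_int)
      fix x :: "real^'d" assume "x \<in> space torus_measure"
      then have xt: "x \<in> torus" by simp
      show "indicator A x - indicator D' x \<le> \<phi> x"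
      proof (cases "x \<in> D")
        case True
        then have "indicator D' x = (1::real)" using xt by (simp add: D'_def)
        then show ?thesis using \<phi>01[of x] by (simp add: indicator_def)
      next
        case False
        then show ?thesis using D\<phi>[OF xt] by (simp add: D'_def)
      qed
    qed
    also have "(LINT x|torus_measure. indicator A x - indicator D' x :: real) =
        (LINT x|torus_measure. indicator A x) - (LINT x|torus_measure. indicator D' x)"
      by (rule Bochner_Integration.integral_diff[OF indA_int indD_int])
    finally show ?thesis using intA intD' by linarith
  qed
  have low_u: "(LINT x|torus_measure. \<phi> x) - \<epsilon> \<le> (LINT x|torus_measure. u x)"
  proof -
    have "(LINT x|torus_measure. \<phi> x - \<epsilon>) \<le> (LINT x|torus_measure. u x)"
    proof (rule integral_mono)
      show "integrable torus_measure (\<lambda>x. \<phi> x - \<epsilon>)"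
        using \<phi>_int by (intro Bochner_Integration.integrable_diff) (auto intro: finite_measure.integrable_const[OF fm_tm])
      show "integrable torus_measure u" by (rule u_int)
      fix x :: "real^'d" assume "x \<in> space torus_measure"
      then show "\<phi> x - \<epsilon> \<le> u x" using u\<phi>[of x] by auto
    qed
    moreover have "(LINT x|torus_measure. \<phi> x - \<epsilon>) = (LINT x|torus_measure. \<phi> x) - \<epsilon>"
      using \<phi>_int by (subst Bochner_Integration.integral_diff)
        (auto intro: finite_measure.integrable_const[OF fm_tm] simp: int_const_tm)
    ultimately show ?thesis by simp
  qed
  have lowS: "s * (measure lebesgue A - 2 * \<epsilon>) \<le> (LINT x|torus_measure. s * u x)"
  proof -
    have "measure lebesgue A - 2*\<epsilon> \<le> (LINT x|torus_measure. u x)" using low_phi low_u by linarith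
    then have "s * (measure lebesgue A - 2*\<epsilon>) \<le> s * (LINT x|torus_measure. u x)"
      using s0 by (intro mult_left_mono) auto
    then show ?thesis by simp
  qed
  have up: "(LINT x|torus_measure. cmod (gg \<mu> x) * exp (s * u x))
      \<le> (LINT x|torus_measure. exp (s * \<epsilon>) * (2 + K * indicator D' x))"
  proof (rule integral_mono_AE)
    show "integrable torus_measure (\<lambda>x. cmod (gg \<mu> x) * exp (s * u x))"
    proof (rule int_bdd_real[where B="2 * exp (s * (1 + \<epsilon>))"])
      show "(\<lambda>x. cmod (gg \<mu> x) * exp (s * u x)) \<in> borel_measurable torus_measure"
        using umeas by measurable
      show "AE x in torus_measure. norm (cmod (gg \<mu> x) * exp (s * u x)) \<le> 2 * exp (s * (1 + \<epsilon>))"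
        using gg_bdd[of \<mu>]
      proof (rule AE_tm_mono)
        fix x assume xt: "x \<in> torus" and g: "cmod (gg \<mu> x) \<le> 1 + cmod \<mu>"
        have "u x \<le> 1 + \<epsilon>" using u\<phi>[OF xt] \<phi>01[of x] by auto
        then have "exp (s * u x) \<le> exp (s * (1 + \<epsilon>))" using s0 by (simp add: mult_left_mono)
        then show "norm (cmod (gg \<mu> x) * exp (s * u x)) \<le> 2 * exp (s * (1 + \<epsilon>))"
          using g \<mu> by (simp add: abs_mult) (intro mult_mono, auto)
      qed
    qed
    show "integrable torus_measure (\<lambda>x. exp (s * \<epsilon>) * (2 + K * indicator D' x))"
      using indD_int by (auto intro!: finite_measure.integrable_const[OF fm_tm])
    show "AE x in torus_measure. cmod (gg \<mu> x) * exp (s * u x) \<le> exp (s * \<epsilon>) * (2 + K * indicator D' x)"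
      using gg_bdd[of \<mu>]
    proof (rule AE_tm_mono)
        fix x :: "real^'d" assume xt: "x \<in> torus" and g2: "cmod (gg \<mu> x) \<le> 1 + cmod \<mu>"
        have g2': "cmod (gg \<mu> x) \<le> 2" using g2 \<mu> by simp
        have e1: "exp (s * u x) \<le> exp (s * \<epsilon>) * exp (s * \<phi> x)"
        proof -
          have "u x \<le> \<phi> x + \<epsilon>" using u\<phi>[OF xt] by auto
          then have "s * u x \<le> s * (\<phi> x + \<epsilon>)" using s0 by (intro mult_left_mono) auto
          then have "s * u x \<le> s * \<epsilon> + s * \<phi> x" by (simp add: algebra_simps)
          then show ?thesis by (simp add: exp_add[symmetric])
        qed
        have e2: "exp (s * \<phi> x) \<le> 1 + (exp s - 1) * \<phi> x"
          using exp_convex_01 \<phi>01 by blast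
        have e3: "cmod (gg \<mu> x) * (1 + (exp s - 1) * \<phi> x) \<le> 2 + K * indicator D' x"
        proof (cases "x \<in> D")
          case True
          then have iD: "indicator D' x = (1::real)" using xt by (simp add: D'_def)
          have ph: "(exp s - 1) * \<phi> x \<le> (exp s - 1)" using \<phi>01[of x] s0 by (simp add: mult_left_le)
          have ph2: "1 + (exp s - 1) * \<phi> x \<le> 1 + (exp s - 1)" using ph by linarith
          have ph3: "0 \<le> 1 + (exp s - 1) * \<phi> x" using \<phi>01[of x] s0 by simp
          have "cmod (gg \<mu> x) * (1 + (exp s - 1) * \<phi> x) \<le> 2 * (1 + (exp s - 1))"
            by (rule mult_mono[OF g2' ph2]) (use ph3 in auto)
          then show ?thesis by (simp add: iD K_def algebra_simps)
        next
          case False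
          then have iD: "indicator D' x = (0::real)" by (simp add: D'_def)
          show ?thesis
          proof (cases "x \<in> A")
            case True
            then have "\<phi> x = 1" using D\<phi>[OF xt False] by simp
            then have "cmod (gg \<mu> x) * (1 + (exp s - 1) * \<phi> x) = cmod (gg \<mu> x) * (2/\<delta>)" by (simp add: es)
            also have "\<dots> \<le> \<delta> * (2/\<delta>)" using small[OF True] \<delta> by (intro mult_right_mono) auto
            also have "\<dots> = 2" using \<delta> by simp
            finally show ?thesis by (simp add: iD)
          next
            case xA: False
            then have "\<phi> x = 0" using D\<phi>[OF xt False] by simp
            then show ?thesis using g2' by (simp add: iD)
          qed
        qed
        have "cmod (gg \<mu> x) * exp (s * u x) \<le> cmod (gg \<mu> x) * (exp (s * \<epsilon>) * (1 + (exp s - 1) * \<phi> x))"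
          using e1 e2 by (intro mult_left_mono) (auto intro: order.trans)
        also have "\<dots> = exp (s * \<epsilon>) * (cmod (gg \<mu> x) * (1 + (exp s - 1) * \<phi> x))" by simp
        also have "\<dots> \<le> exp (s * \<epsilon>) * (2 + K * indicator D' x)"
          using e3 by (intro mult_left_mono) auto
        finally show "cmod (gg \<mu> x) * exp (s * u x) \<le> exp (s * \<epsilon>) * (2 + K * indicator D' x)" .
    qed
  qed
  also have "(LINT x|torus_measure. exp (s * \<epsilon>) * (2 + K * indicator D' x)) =
      exp (s * \<epsilon>) * (2 + K * (LINT x|torus_measure. indicator D' x))"
    using indD_int by (simp add: int_const_tm Bochner_Integration.integral_add finite_measure.integrable_const[OF fm_tm])
  also have "\<dots> \<le> exp (s * \<epsilon>) * (2 + K * \<epsilon>)"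
    using intD' K0 by (intro mult_left_mono add_left_mono) auto
  finally have upS: "(LINT x|torus_measure. cmod (gg \<mu> x) * exp (s * u x)) \<le> exp (s * \<epsilon>) * (2 + K * \<epsilon>)" .
  have "c * exp (s * (measure lebesgue A - 2 * \<epsilon>)) \<le> exp (s * \<epsilon>) * (2 + K * \<epsilon>)"
  proof -
    have "c * exp (s * (measure lebesgue A - 2 * \<epsilon>)) \<le> c * exp (LINT x|torus_measure. s * u x)"
      using lowS c0 by (intro mult_left_mono) auto
    then show ?thesis using jt upS by linarith
  qed
  then have "c * exp (s * measure lebesgue A) * exp (- (2 * s * \<epsilon>)) \<le> exp (s * \<epsilon>) * (2 + K * \<epsilon>)"
    by (simp add: algebra_simps exp_add[symmetric] exp_diff)
  then have "c * exp (s * measure lebesgue A) \<le> exp (s * \<epsilon>) * (2 + K * \<epsilon>) * exp (2 * s * \<epsilon>)"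
    by (simp add: exp_minus field_simps)
  also have "\<dots> = exp (3 * s * \<epsilon>) * (2 + K * \<epsilon>)"
    by (simp add: exp_add[symmetric] algebra_simps)
  finally have fin: "c * exp (s * measure lebesgue A) \<le> exp (3 * s * \<epsilon>) * (2 + K * \<epsilon>)" .
  have "K = 2 * (2/\<delta> - 1)" by (simp add: K_def es)
  then show ?thesis using fin by (simp only: c_def s_def)
qed


lemma J:
  assumes A: "A \<in> sets lebesgue" "A \<subseteq> torus" and \<delta>: "0 < \<delta>" "\<delta> < 2"
    and small: "\<And>x. x \<in> A \<Longrightarrow> cmod (gg \<mu> x) \<le> \<delta>" and \<mu>: "cmod \<mu> = 1"
  shows "cmod (fourier_coeff f 0) * exp (ln (2/\<delta>) * measure lebesgue A) \<le> 2"
proof -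
  define K where "K = 2 * (2/\<delta> - 1)"
  define s where "s = ln (2/\<delta>)"
  have lim: "((\<lambda>\<epsilon>. exp (3 * s * \<epsilon>) * (2 + K * \<epsilon>)) \<longlongrightarrow> exp (3 * s * 0) * (2 + K * 0)) (at_right 0)"
    by (intro tendsto_intros)
  have ev: "eventually (\<lambda>\<epsilon>. cmod (fourier_coeff f 0) * exp (s * measure lebesgue A) \<le> exp (3 * s * \<epsilon>) * (2 + K * \<epsilon>)) (at_right (0::real))"
  proof (rule eventually_at_rightI[of 0 1])
    fix \<epsilon> :: real assume "\<epsilon> \<in> {0<..<1}"
    then show "cmod (fourier_coeff f 0) * exp (s * measure lebesgue A) \<le> exp (3 * s * \<epsilon>) * (2 + K * \<epsilon>)"
      using J_eps[OF A \<delta> small \<mu>, of \<epsilon>] by (simp add: K_def s_def)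
  qed simp
  have "cmod (fourier_coeff f 0) * exp (s * measure lebesgue A) \<le> exp (3 * s * 0) * (2 + K * 0)"
    by (rule tendsto_le[OF _ lim tendsto_const ev]) simp
  then show ?thesis by (simp add: s_def)
qed

end


lemma geo_sum: "(1 - z) * (\<Sum>m=M..M+p. z^m) = z^M - z^(M+p+1)" for z :: complex
proof (induction p)
  case 0 then show ?case by (simp add: algebra_simps)
next
  case (Suc p)
  have e1: "(\<Sum>m=M..M+Suc p. z^m) = (\<Sum>m=M..M+p. z^m) + z^(M + Suc p)"
    by simp
  have e2: "(1 - z) * z^(M + Suc p) = z^(M + Suc p) - z^(Suc (M + Suc p))"
    by (simp add: algebra_simps)
  have "(1 - z) * (\<Sum>m=M..M+Suc p. z^m) = (1 - z) * (\<Sum>m=M..M+p. z^m) + (1 - z) * z^(M + Suc p)"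
    unfolding e1 by (simp add: distrib_left)
  also have "\<dots> = z^M - z^(M+p+1) + (z^(M + Suc p) - z^(Suc (M + Suc p)))"
    unfolding e2 Suc.IH ..
  also have "\<dots> = z^M - z^(M + Suc p + 1)" by simp
  finally show ?case .
qed

lemma geo_bound:
  fixes z :: complex
  assumes z: "cmod z = 1"
  shows "cmod (\<Sum>m=M..M+p. z^m) \<le> (if cmod (1 - z) < 2 / sqrt (real (p+1)) then real (p+1) else sqrt (real (p+1)))"
proof (cases "cmod (1 - z) < 2 / sqrt (real (p+1))")
  case True
  have "cmod (\<Sum>m=M..M+p. z^m) \<le> (\<Sum>m=M..M+p. cmod (z^m))" by (rule norm_sum)
  also have "\<dots> = real (p+1)" using z by (simp add: norm_power)
  finally show ?thesis using True by simp
next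
  case False
  have sp: "sqrt (real (p+1)) > 0" by simp
  then have t0: "2 / sqrt (real (p+1)) > 0" by simp
  then have nz: "cmod (1 - z) > 0" using False by linarith
  have "cmod (1 - z) * cmod (\<Sum>m=M..M+p. z^m) = cmod (z^M - z^(M+p+1))"
    by (simp add: geo_sum norm_mult[symmetric])
  also have "\<dots> \<le> cmod (z^M) + cmod (z^(M+p+1))" by (rule norm_triangle_ineq4)
  also have "\<dots> = 2" using z by (simp add: norm_power norm_mult)
  finally have "cmod (\<Sum>m=M..M+p. z^m) \<le> 2 / cmod (1 - z)" using nz by (simp add: field_simps)
  also have "\<dots> \<le> 2 / (2 / sqrt (real (p+1)))"
    by (rule divide_left_mono) (use False mult_pos_pos[OF nz t0] in auto)
  also have "\<dots> = sqrt (real (p+1))" using sp by simp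
  finally show ?thesis using False by simp
qed

lemma ln_le_sqrt: "x > 0 \<Longrightarrow> ln x \<le> sqrt x"
proof -
  assume x: "x > 0"
  have sx: "sqrt x > 0" using x by simp
  have "ln x = 2 * ln (sqrt x)" using x by (simp add: ln_sqrt)
  also have "\<dots> = 2 * (ln (sqrt x / 2) + ln 2)" using sx by (simp add: ln_div)
  also have "\<dots> \<le> 2 * ((sqrt x / 2 - 1) + ln 2)"
    using ln_le_minus_one[of "sqrt x / 2"] sx by simp
  also have "\<dots> \<le> sqrt x" using ln_2_less_1 by simp
  finally show ?thesis .
qed


lemma ln2_ge_half: "ln (2::real) \<ge> 1/2"
proof -
  have "ln (1/2::real) \<le> 1/2 - 1" by (rule ln_le_minus_one) simp
  then show ?thesis by (simp add: ln_div)
qed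

lemma lat_dot_smult: "lat_dot (k *s \<nu>) x = real_of_int k * lat_dot \<nu> x"
  by (simp add: lat_dot_def sum_distrib_left mult_ac)

lemma exp_bcoef:
  fixes \<nu> :: "int^'d"
  shows "exp (- 2 * pi * \<i> * of_int (int m - k) * complex_of_real (lat_dot \<nu> x)) = ee (-\<nu>) x ^ m * ee (k *s \<nu>) x"
proof -
  have "ee (-\<nu>) x ^ m * ee (k *s \<nu>) x = exp (of_nat m * (2 * pi * \<i> * complex_of_real (lat_dot (-\<nu>) x))) * ee (k *s \<nu>) x"
    unfolding ee_def exp_of_nat_mult ..
  also have "\<dots> = exp (of_nat m * (2 * pi * \<i> * complex_of_real (lat_dot (-\<nu>) x)) + 2 * pi * \<i> * complex_of_real (lat_dot (k *s \<nu>) x))"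
    unfolding ee_def by (simp add: exp_add)
  also have "of_nat m * (2 * pi * \<i> * complex_of_real (lat_dot (-\<nu>) x)) + 2 * pi * \<i> * complex_of_real (lat_dot (k *s \<nu>) x)
      = - 2 * pi * \<i> * of_int (int m - k) * complex_of_real (lat_dot \<nu> x)"
    by (simp add: lat_dot_uminus lat_dot_smult algebra_simps)
  finally show ?thesis by simp
qed

context
  fixes f :: "real^'d \<Rightarrow> complex" and \<nu> :: "int^'d" and S :: "(int^'d) set"
  assumes meas: "f \<in> borel_measurable torus_measure"
    and bdd: "AE x in torus_measure. cmod (f x) \<le> 1"
    and hs: "half_space S"
    and vanish: "\<forall>\<xi>\<in>S. fourier_coeff f \<xi> = 0"
    and nu: "\<nu> \<in> uminus ` S"
    and nz: "fourier_coeff f 0 \<noteq> 0"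
begin

lemmas Jf = J[OF meas bdd hs vanish nu]
lemmas gg_eq = gg_def[OF meas bdd hs vanish nu]

lemma c_le_1: "cmod (fourier_coeff f 0) \<le> 1"
proof -
  have "fourier_coeff f 0 = (LINT x|torus_measure. f x)" by (simp add: fourier_coeff_def lat_dot_def)
  then have "cmod (fourier_coeff f 0) \<le> (LINT x|torus_measure. cmod (f x))"
    by (simp add: integral_norm_bound)
  also have "\<dots> \<le> (LINT x|(torus_measure :: (real^'d) measure). (1::real))"
    by (rule integral_mono_AE[OF integrable_norm[OF f_int[OF meas bdd hs vanish nu]]])
      (use bdd in \<open>auto intro: finite_measure.integrable_const[OF fm_tm]\<close>)
  also have "\<dots> = 1" by (rule int_const_tm)
  finally show ?thesis .
qed

definition EE where "EE = unimod_set f"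

lemma EE_sub: "EE \<subseteq> torus" by (auto simp: EE_def unimod_set_def)

lemma EE_tm: "EE \<in> sets torus_measure"
proof -
  have "{x \<in> space torus_measure. cmod (f x) = 1} \<in> sets torus_measure"
    using meas by measurable
  then show ?thesis by (simp add: EE_def unimod_set_def)
qed

lemma sets_tm_leb: "A \<in> sets torus_measure \<Longrightarrow> A \<in> sets lebesgue"
  unfolding torus_measure_def by (subst (asm) sets_restrict_space_iff) auto

lemma EE_leb: "EE \<in> sets lebesgue" by (rule sets_tm_leb[OF EE_tm])

definition HH where "HH x = f x * ee (-\<nu>) x"

lemma HH_meas[measurable]: "HH \<in> borel_measurable torus_measure"
  unfolding HH_def using meas by measurable

lemma HH_1: "x \<in> EE \<Longrightarrow> cmod (HH x) = 1"
  by (simp add: HH_def EE_def unimod_set_def norm_mult)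

lemma HH_gg:
  assumes "y \<in> EE"
  shows "cmod (HH y - \<mu>) = cmod (gg f \<nu> \<mu> y)"
proof -
  have "ee (-\<nu>) y * ee \<nu> y = 1" by (simp add: ee_add[symmetric])
  then have "HH y - \<mu> = ee (-\<nu>) y * gg f \<nu> \<mu> y"
    by (simp add: HH_def gg_eq algebra_simps)
  then show ?thesis by (simp add: norm_mult)
qed

lemma one_minus_gg:
  assumes "x \<in> EE" "y \<in> EE"
  shows "cmod (1 - cnj (HH y) * HH x) = cmod (gg f \<nu> (HH x) y)"
proof -
  have "cmod (1 - cnj (HH y) * HH x) = cmod (HH y) * cmod (1 - cnj (HH y) * HH x)"
    using HH_1[OF assms(2)] by simp
  also have "\<dots> = cmod (HH y - (HH y * cnj (HH y)) * HH x)"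
    by (simp add: norm_mult[symmetric] algebra_simps)
  also have "HH y * cnj (HH y) = 1"
    using HH_1[OF assms(2)] complex_norm_square[of "HH y"] by simp
  finally show ?thesis using HH_gg[OF assms(2)] by simp
qed


lemma cnj_meas[measurable]:
  fixes h :: "'a \<Rightarrow> complex"
  assumes "h \<in> borel_measurable M"
  shows "(\<lambda>x. cnj (h x)) \<in> borel_measurable M"
proof -
  have "cnj \<in> borel_measurable borel"
    by (rule borel_measurable_continuous_onI) (intro continuous_intros)
  from measurable_compose[OF assms this] show ?thesis by (simp add: o_def)
qed

lemma ek_meas[measurable]: "ee \<eta> \<in> borel_measurable torus_measure" by (rule ee_meas)

lemma int_tm_bdd:
  fixes h :: "real^'d \<Rightarrow> complex"
  assumes "h \<in> borel_measurable torus_measure" "\<And>x. x \<in> torus \<Longrightarrow> norm (h x) \<le> B"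
  shows "integrable torus_measure h"
  by (rule int_bdd[OF assms(1), where B=B]) (rule AE_I2, use assms(2) in simp)

lemma int_tm_bdd_real:
  fixes h :: "real^'d \<Rightarrow> real"
  assumes "h \<in> borel_measurable torus_measure" "\<And>x. x \<in> torus \<Longrightarrow> norm (h x) \<le> B"
  shows "integrable torus_measure h"
  by (rule int_bdd_real[OF assms(1), where B=B]) (rule AE_I2, use assms(2) in simp)

lemma b_eq: "bcoef f \<nu> (int m) (int m - k) =
   (LINT x|torus_measure. indicator EE x * (HH x ^ m * ee (k *s \<nu>) x))"
proof -
  have e: "f x powi int m * (ee (-\<nu>) x ^ m * ee (k *s \<nu>) x) =
      HH x ^ m * ee (k *s \<nu>) x" for x
    by (simp add: HH_def power_mult_distrib power_int_of_nat mult.assoc)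
  show ?thesis unfolding bcoef_def EE_def exp_bcoef e ..
qed

lemma S_bound:
  fixes M p :: nat
  assumes x: "x \<in> EE" and p: "p \<ge> 1"
  defines "N \<equiv> real (p+1)"
  shows "cmod (\<Sum>m=M..M+p. cnj (bcoef f \<nu> (int m) (int m - k)) * HH x ^ m)
     \<le> sqrt N + N * (2 * ln (2 / cmod (fourier_coeff f 0)) / ln N)"
proof -
  define c where "c = cmod (fourier_coeff f 0)"
  have c0: "c > 0" using nz by (simp add: c_def)
  have N2: "N \<ge> 2" using p by (simp add: N_def)
  have sN: "sqrt N > 1" using N2 by (simp add: real_less_rsqrt)
  define \<delta> where "\<delta> = 2 / sqrt N"
  have \<delta>: "0 < \<delta>" "\<delta> < 2" using sN by (auto simp: \<delta>_def field_simps)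
  define Ax where "Ax = {y \<in> EE. cmod (gg f \<nu> (HH x) y) < \<delta>}"
  have Ax_tm: "Ax \<in> sets torus_measure"
  proof -
    have "{y \<in> space torus_measure. y \<in> EE \<and> cmod (gg f \<nu> (HH x) y) < \<delta>} \<in> sets torus_measure"
      using EE_tm gg_meas[OF meas bdd hs vanish nu] by measurable
    moreover have "{y \<in> space torus_measure. y \<in> EE \<and> cmod (gg f \<nu> (HH x) y) < \<delta>} = Ax"
      using EE_sub by (auto simp: Ax_def)
    ultimately show ?thesis by simp
  qed
  have Ax_leb: "Ax \<in> sets lebesgue" by (rule sets_tm_leb[OF Ax_tm])
  have Ax_sub: "Ax \<subseteq> torus" using EE_sub by (auto simp: Ax_def)
  have Ax_meas: "measure lebesgue Ax \<le> 2 * ln (2 / c) / ln N"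
  proof -
    have "c * exp (ln (2/\<delta>) * measure lebesgue Ax) \<le> 2"
      unfolding c_def
      by (rule Jf[where \<mu>="HH x", OF Ax_leb Ax_sub \<delta>]) (auto simp: Ax_def HH_1[OF x])
    moreover have "ln (2/\<delta>) = ln N / 2"
      using sN N2 by (simp add: \<delta>_def ln_sqrt)
    ultimately have "c * exp (ln N / 2 * measure lebesgue Ax) \<le> 2" by simp
    then have "ln (c * exp (ln N / 2 * measure lebesgue Ax)) \<le> ln 2"
      using c0 by (subst ln_le_cancel_iff) auto
    then have "ln c + ln N / 2 * measure lebesgue Ax \<le> ln 2"
      using c0 by (simp add: ln_mult)
    then have "ln N / 2 * measure lebesgue Ax \<le> ln (2/c)"
      using c0 by (simp add: ln_div)
    moreover have "ln N > 0" using N2 by simp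
    ultimately show ?thesis by (simp add: field_simps)
  qed
  define bb where "bb m = bcoef f \<nu> (int m) (int m - k)" for m :: nat
  define G where "G y = indicator EE y * cnj (ee (k *s \<nu>) y) * (\<Sum>m=M..M+p. (cnj (HH y) * HH x) ^ m)" for y
  have G_meas: "G \<in> borel_measurable torus_measure"
    unfolding G_def using EE_tm by measurable
  have G_bnd: "cmod (G y) \<le> indicator EE y * sqrt N + N * indicator Ax y" for y
  proof (cases "y \<in> EE")
    case False then show ?thesis using N2 by (simp add: G_def)
  next
    case True
    have z1: "cmod (cnj (HH y) * HH x) = 1" using HH_1[OF x] HH_1[OF True] by (simp add: norm_mult)
    have "cmod (G y) = cmod (\<Sum>m=M..M+p. (cnj (HH y) * HH x) ^ m)"
      using True by (simp add: G_def norm_mult)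
    also have "\<dots> \<le> (if cmod (1 - cnj (HH y) * HH x) < 2 / sqrt N then N else sqrt N)"
      using geo_bound[OF z1, of M p] unfolding N_def .
    also have "\<dots> \<le> indicator EE y * sqrt N + N * indicator Ax y"
      using True one_minus_gg[OF x True] N2 by (auto simp: Ax_def \<delta>_def)
    finally show ?thesis .
  qed
  have G_bnd2: "cmod (G y) \<le> sqrt N + N" for y
  proof -
    have "indicator EE y * sqrt N \<le> sqrt N" using N2 by (simp add: indicator_def)
    moreover have "N * indicator Ax y \<le> N" using N2 by (simp add: indicator_def)
    ultimately show ?thesis using G_bnd[of y] by linarith
  qed
  have G_int: "integrable torus_measure G"
    by (rule int_tm_bdd[OF G_meas, where B="sqrt N + N"]) (rule G_bnd2)
  have sum_eq: "(\<Sum>m=M..M+p. cnj (bb m) * HH x ^ m) = (LINT y|torus_measure. G y)"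
  proof -
    have "(\<Sum>m=M..M+p. cnj (bb m) * HH x ^ m) =
        (\<Sum>m=M..M+p. (LINT y|torus_measure. cnj (indicator EE y * (HH y ^ m * ee (k *s \<nu>) y)) * HH x ^ m))"
    proof (rule sum.cong[OF refl])
      fix m assume "m \<in> {M..M+p}"
      show "cnj (bb m) * HH x ^ m =
          (LINT y|torus_measure. cnj (indicator EE y * (HH y ^ m * ee (k *s \<nu>) y)) * HH x ^ m)"
        by (simp only: bb_def b_eq Bochner_Integration.integral_cnj[symmetric] integral_mult_left_zero)
    qed
    also have "\<dots> = (LINT y|torus_measure. (\<Sum>m=M..M+p. cnj (indicator EE y * (HH y ^ m * ee (k *s \<nu>) y)) * HH x ^ m))"
    proof (rule Bochner_Integration.integral_sum[symmetric])
      fix m assume "m \<in> {M..M+p}"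
      show "integrable torus_measure (\<lambda>y. cnj (indicator EE y * (HH y ^ m * ee (k *s \<nu>) y)) * HH x ^ m)"
      proof (rule int_tm_bdd[where B=1])
        show "(\<lambda>y. cnj (indicator EE y * (HH y ^ m * ee (k *s \<nu>) y)) * HH x ^ m) \<in> borel_measurable torus_measure"
          using EE_tm by measurable
        fix y :: "real^'d"
        show "norm (cnj (indicator EE y * (HH y ^ m * ee (k *s \<nu>) y)) * HH x ^ m) \<le> 1"
          by (cases "y \<in> EE") (simp_all add: norm_mult norm_power HH_1 x)
      qed
    qed
    also have "\<dots> = (LINT y|torus_measure. G y)"
    proof (rule Bochner_Integration.integral_cong[OF refl])
      fix y :: "real^'d"
      show "(\<Sum>m=M..M+p. cnj (indicator EE y * (HH y ^ m * ee (k *s \<nu>) y)) * HH x ^ m) = G y"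
        unfolding G_def
        by (cases "y \<in> EE") (simp_all add: sum_distrib_left power_mult_distrib mult_ac)
    qed
    finally show ?thesis .
  qed
  have "cmod (LINT y|torus_measure. G y) \<le> (LINT y|torus_measure. indicator EE y * sqrt N + N * indicator Ax y)"
  proof (rule Bochner_Integration.integral_norm_bound_integral[OF G_int])
    show "integrable torus_measure (\<lambda>y. indicator EE y * sqrt N + N * indicator Ax y)"
      using EE_tm Ax_tm by (intro int_tm_bdd_real[where B="sqrt N + N"]) (use N2 in \<open>auto simp: indicator_def\<close>)
  qed (rule G_bnd)
  also have "\<dots> = sqrt N * measure lebesgue EE + N * measure lebesgue Ax"
  proof -
    have i1: "integrable torus_measure (indicator EE :: _ \<Rightarrow> real)"
      using EE_tm by (intro int_tm_bdd_real[where B=1]) (auto simp: indicator_def)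
    have i2: "integrable torus_measure (indicator Ax :: _ \<Rightarrow> real)"
      using Ax_tm by (intro int_tm_bdd_real[where B=1]) (auto simp: indicator_def)
    have "(LINT y|torus_measure. indicator EE y * sqrt N + N * indicator Ax y) =
        sqrt N * (LINT y|torus_measure. indicator EE y) + N * (LINT y|torus_measure. indicator Ax y)"
      using i1 i2 by (simp add: mult.commute)
    also have "\<dots> = sqrt N * measure lebesgue EE + N * measure lebesgue Ax"
      using EE_sub Ax_sub by (simp add: Int_absorb2 tm_measure[OF EE_leb EE_sub] tm_measure[OF Ax_leb Ax_sub])
    finally show ?thesis .
  qed
  also have "\<dots> \<le> sqrt N * 1 + N * (2 * ln (2 / c) / ln N)"
    using measure_le_1[OF EE_leb EE_sub] Ax_meas N2
    by (intro add_mono mult_left_mono) auto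
  finally show ?thesis using sum_eq by (simp add: bb_def c_def)
qed


lemma main_ineq:
  fixes M p :: nat and k :: int
  assumes p: "p \<ge> 1"
  shows "(1 / real (p + 1)) * (\<Sum>m=M..M+p. (cmod (bcoef f \<nu> (int m) (int m - k)))\<^sup>2)
       \<le> ln (16 / (cmod (fourier_coeff f 0)) ^ 4) / ln (real (p + 1))"
proof -
  define N where "N = real (p+1)"
  define c where "c = cmod (fourier_coeff f 0)"
  have c0: "c > 0" using nz by (simp add: c_def)
  have c1: "c \<le> 1" using c_le_1 by (simp add: c_def)
  define Lc where "Lc = ln (2 / c)"
  have Lc: "Lc \<ge> 1/2"
  proof -
    have "ln 2 \<le> ln (2 / c)" using c0 c1 by (subst ln_le_cancel_iff) (auto simp: field_simps)
    then show ?thesis using ln2_ge_half by (simp add: Lc_def)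
  qed
  have N2: "N \<ge> 2" using p by (simp add: N_def)
  have lnN: "ln N > 0" using N2 by simp
  define Bd where "Bd = sqrt N + N * (2 * Lc / ln N)"
  have Bd0: "Bd \<ge> 0" using N2 lnN Lc by (simp add: Bd_def)
  define bb where "bb m = bcoef f \<nu> (int m) (int m - k)" for m :: nat
  define ek where "ek = ee (k *s \<nu>)"
  define SS where "SS x = (\<Sum>m=M..M+p. cnj (bb m) * HH x ^ m)" for x
  define T where "T = (\<Sum>m=M..M+p. (cmod (bb m))\<^sup>2)"
  have T0: "T \<ge> 0" by (simp add: T_def sum_nonneg)
  have SS_meas: "SS \<in> borel_measurable torus_measure" unfolding SS_def by measurable
  have SS_bd: "cmod (SS x) \<le> Bd" if "x \<in> EE" for x
    using S_bound[OF that p, where M=M and k=k] by (simp add: SS_def bb_def Bd_def Lc_def N_def c_def)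
  have A: "complex_of_real T = (\<Sum>m=M..M+p. cnj (bb m) * bb m)"
    unfolding T_def of_real_sum by (rule sum.cong[OF refl]) (simp only: complex_norm_square mult.commute)
  have B: "(\<Sum>m=M..M+p. cnj (bb m) * bb m) = (LINT x|torus_measure. indicator EE x * ek x * SS x)"
  proof -
    have "(\<Sum>m=M..M+p. cnj (bb m) * bb m) =
        (\<Sum>m=M..M+p. (LINT x|torus_measure. cnj (bb m) * (indicator EE x * (HH x ^ m * ek x))))"
      by (simp add: bb_def b_eq ek_def)
    also have "\<dots> = (LINT x|torus_measure. (\<Sum>m=M..M+p. cnj (bb m) * (indicator EE x * (HH x ^ m * ek x))))"
    proof (rule Bochner_Integration.integral_sum[symmetric])
      fix m assume "m \<in> {M..M+p}"
      show "integrable torus_measure (\<lambda>x. cnj (bb m) * (indicator EE x * (HH x ^ m * ek x)))"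
      proof (rule int_tm_bdd[where B="cmod (bb m)"])
        show "(\<lambda>x. cnj (bb m) * (indicator EE x * (HH x ^ m * ek x))) \<in> borel_measurable torus_measure"
          using EE_tm unfolding ek_def by measurable
        fix x :: "real^'d"
        show "norm (cnj (bb m) * (indicator EE x * (HH x ^ m * ek x))) \<le> cmod (bb m)"
          by (cases "x \<in> EE") (simp_all add: norm_mult norm_power HH_1 ek_def)
      qed
    qed
    also have "\<dots> = (LINT x|torus_measure. indicator EE x * ek x * SS x)"
      by (rule Bochner_Integration.integral_cong[OF refl]) (simp add: SS_def sum_distrib_left mult_ac)
    finally show ?thesis .
  qed
  have C: "T \<le> (LINT x|torus_measure. indicator EE x * cmod (SS x))"
  proof -
    have "T = cmod (complex_of_real T)" using T0 by simp
    also have "\<dots> = cmod (LINT x|torus_measure. indicator EE x * ek x * SS x)" using A B by simp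
    also have "\<dots> \<le> (LINT x|torus_measure. cmod (indicator EE x * ek x * SS x))"
      by (rule integral_norm_bound)
    also have "\<dots> = (LINT x|torus_measure. indicator EE x * cmod (SS x))"
      by (rule Bochner_Integration.integral_cong[OF refl]) (simp add: norm_mult ek_def indicator_def)
    finally show ?thesis .
  qed
  have D: "(LINT x|torus_measure. indicator EE x * cmod (SS x)) \<le> Bd"
  proof -
    have "(LINT x|torus_measure. indicator EE x * cmod (SS x)) \<le> (LINT x|torus_measure. indicator EE x * Bd)"
    proof (rule integral_mono)
      show "integrable torus_measure (\<lambda>x. indicator EE x * cmod (SS x))"
      proof (rule int_tm_bdd_real[where B=Bd])
        show "(\<lambda>x. indicator EE x * cmod (SS x)) \<in> borel_measurable torus_measure"
          using EE_tm SS_meas by measurable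
        fix x :: "real^'d"
        show "norm (indicator EE x * cmod (SS x)) \<le> Bd"
          using SS_bd[of x] Bd0 by (cases "x \<in> EE") auto
      qed
      show "integrable torus_measure (\<lambda>x. indicator EE x * Bd)"
        using EE_tm by (intro int_tm_bdd_real[where B=Bd]) (use Bd0 in \<open>auto simp: indicator_def\<close>)
      fix x :: "real^'d"
      show "indicator EE x * cmod (SS x) \<le> indicator EE x * Bd"
        using SS_bd[of x] by (cases "x \<in> EE") auto
    qed
    also have "\<dots> = measure lebesgue EE * Bd"
      using EE_sub by (simp add: tm_measure[OF EE_leb EE_sub] Int_absorb2)
    also have "\<dots> \<le> 1 * Bd"
      using measure_le_1[OF EE_leb EE_sub] Bd0 by (intro mult_right_mono) auto
    finally show ?thesis by simp
  qed
  have TB: "T \<le> Bd" using C D by linarith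
  have E: "Bd \<le> 4 * Lc * N / ln N"
  proof -
    have sN: "sqrt N > 0" using N2 by simp
    have "ln N \<le> sqrt N" using ln_le_sqrt N2 by simp
    also have "\<dots> \<le> 2 * Lc * sqrt N" using Lc sN by (simp add: mult_right_mono[of 1 "2*Lc" "sqrt N", simplified])
    finally have "ln N \<le> 2 * Lc * sqrt N" .
    then have "sqrt N * ln N \<le> sqrt N * (2 * Lc * sqrt N)"
      using sN by (intro mult_left_mono) auto
    also have "\<dots> = 2 * Lc * (sqrt N * sqrt N)" by (simp add: mult_ac)
    also have "sqrt N * sqrt N = N" using N2 by simp
    finally have "sqrt N * ln N \<le> 2 * Lc * N" .
    then have "sqrt N \<le> 2 * Lc * N / ln N" using lnN by (simp add: field_simps)
    moreover have "N * (2 * Lc / ln N) = 2 * Lc * N / ln N" by simp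
    moreover have "4 * Lc * N / ln N = 2 * (2 * Lc * N / ln N)" by simp
    ultimately show ?thesis unfolding Bd_def by linarith
  qed
  have C16: "ln (16 / c ^ 4) = 4 * Lc"
  proof -
    have "16 / c ^ 4 = (2 / c) ^ 4" by (simp add: power_divide)
    then show ?thesis using c0 by (simp add: Lc_def ln_realpow)
  qed
  have "(1 / N) * T \<le> (1 / N) * (4 * Lc * N / ln N)"
    using TB E N2 by (intro mult_left_mono) auto
  also have "\<dots> = 4 * Lc / ln N" using N2 by simp
  finally show ?thesis by (simp add: N_def T_def bb_def C16[unfolded c_def])
qed

end


theorem theorem1:
  fixes f :: "real^'d \<Rightarrow> complex" and \<nu> :: "int^'d" and S :: "(int^'d) set"
  assumes meas: "f \<in> borel_measurable torus_measure"
    and bdd: "AE x in torus_measure. cmod (f x) \<le> 1"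
    and hs: "half_space S"
    and vanish: "\<forall>\<xi>\<in>S. fourier_coeff f \<xi> = 0"
    and nu: "\<nu> \<in> uminus ` S"
    and nz: "fourier_coeff f 0 \<noteq> 0"
  shows "\<forall>M p :: nat. \<forall>k :: int. M \<ge> 1 \<longrightarrow> p \<ge> 1 \<longrightarrow>
     (1 / real (p + 1)) * (\<Sum>m=M..M+p. (cmod (bcoef f \<nu> (int m) (int m - k)))\<^sup>2)
       \<le> ln (16 / (cmod (fourier_coeff f 0)) ^ 4) / ln (real (p + 1))"
proof (intro allI impI)
  fix M p :: nat and k :: int
  assume "M \<ge> 1" "p \<ge> 1"
  show "(1 / real (p + 1)) * (\<Sum>m=M..M+p. (cmod (bcoef f \<nu> (int m) (int m - k)))\<^sup>2)
       \<le> ln (16 / (cmod (fourier_coeff f 0)) ^ 4) / ln (real (p + 1))"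
    by (rule main_ineq[OF meas bdd hs vanish nu nz \<open>p \<ge> 1\<close>])
qed

end
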